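(* Let $T_t$ be an aperiodic ergodic measure-preserving flow on a standard probability space $(X,m)$, and let $\varphi:(0,\infty)\to(0,\infty)$ satisfy $\varphi(t)\to0$ as $t\to+\infty$. Then there exists $f\in L_1(X,m)$ with $\int_X f\,dm=0$ such that for almost every $x\in X$ $$\limsup_{t\to+\infty}\frac{1}{\varphi(t)}|A(f,t,x)|=+\infty.$$
   Context: A flow is aperiodic if almost every point is not periodic (there is no $t>0$ with $T_tx=x$). Birkhoff average: $A(f,t,x)=\frac1t\int_0^t f(T_sx)\,ds$. *)

theory Defs
  imports "HOL-Probability.Probability"
begin

definition standard_prob_space :: "'a::polish_space measure \<Rightarrow> bool" where
  "standard_prob_space M \<longleftrightarrow> prob_space M \<and> sets M = sets (borel :: 'a measure)"

definition mp_flow :: "'a measure \<Rightarrow> (real \<Rightarrow> 'a \<Rightarrow> 'a) \<Rightarrow> bool" where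
  "mp_flow M T \<longleftrightarrow>
     (\<lambda>(t, x). T t x) \<in> measurable (lborel \<Otimes>\<^sub>M M) M
   \<and> (\<forall>x\<in>space M. T 0 x = x)
   \<and> (\<forall>s t. \<forall>x\<in>space M. T (s + t) x = T s (T t x))
   \<and> (\<forall>t. T t \<in> measurable M M \<and> distr M M (T t) = M)"

definition ergodic_flow :: "'a measure \<Rightarrow> (real \<Rightarrow> 'a \<Rightarrow> 'a) \<Rightarrow> bool" where
  "ergodic_flow M T \<longleftrightarrow>
     (\<forall>A\<in>sets M. (\<forall>t. T t -` A \<inter> space M = A) \<longrightarrow> measure M A = 0 \<or> measure M A = 1)"

definition aperiodic_flow :: "'a measure \<Rightarrow> (real \<Rightarrow> 'a \<Rightarrow> 'a) \<Rightarrow> bool" where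
  "aperiodic_flow M T \<longleftrightarrow> (AE x in M. \<forall>t>0. T t x \<noteq> x)"

definition birkhoff_avg :: "(real \<Rightarrow> 'a \<Rightarrow> 'a) \<Rightarrow> ('a \<Rightarrow> real) \<Rightarrow> real \<Rightarrow> 'a \<Rightarrow> real" where
  "birkhoff_avg T f t x = (1 / t) * (LBINT s=0..t. f (T s x))"

end

theory Submission
  imports Defs
begin


locale fl = prob_space M for M :: "'a::polish_space measure" +
  fixes T :: "real \<Rightarrow> 'a \<Rightarrow> 'a"
  assumes sets_M: "sets M = sets borel"
  and Tm: "(\<lambda>(t,x). T t x) \<in> measurable (lborel \<Otimes>\<^sub>M M) M"
  and T0: "\<And>x. T 0 x = x"
  and Tadd: "\<And>s t x. T (s+t) x = T s (T t x)"
  and Tmeas: "\<And>t. T t \<in> measurable M M"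
  and Tpres: "\<And>t. distr M M (T t) = M"
begin

lemma space_M: "space M = UNIV"
  using sets_eq_imp_space_eq[OF sets_M] by simp

lemma sets_M_borel[measurable_cong]: "A \<in> sets M \<longleftrightarrow> A \<in> sets borel"
  using sets_M by simp

lemma TT_inv: "T (-t) (T t x) = x"
  by (metis T0 Tadd add.left_inverse)

lemma TT_inv2: "T t (T (-t) x) = x"
  by (metis T0 Tadd add.right_inverse)

lemma emeasure_T: "A \<in> sets M \<Longrightarrow> emeasure M (T t -` A) = emeasure M A"
proof -
  assume A: "A \<in> sets M"
  have "emeasure M A = emeasure (distr M M (T t)) A" using Tpres by simp
  also have "\<dots> = emeasure M (T t -` A \<inter> space M)" using A Tmeas by (simp add: emeasure_distr)
  finally show ?thesis by (simp add: space_M)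
qed

lemma measure_T: "A \<in> sets M \<Longrightarrow> measure M (T t -` A) = measure M A"
  using emeasure_T by (simp add: measure_def)

lemma nn_integral_T: "g \<in> borel_measurable M \<Longrightarrow> (\<integral>\<^sup>+x. g (T t x) \<partial>M) = (\<integral>\<^sup>+x. g x \<partial>M)"
proof -
  assume g: "g \<in> borel_measurable M"
  have "(\<integral>\<^sup>+x. g x \<partial>M) = (\<integral>\<^sup>+x. g x \<partial>distr M M (T t))" using Tpres by simp
  also have "\<dots> = (\<integral>\<^sup>+x. g (T t x) \<partial>M)" using g Tmeas by (simp add: nn_integral_distr)
  finally show ?thesis by simp
qed

lemma integral_T: "(g::_\<Rightarrow>real) \<in> borel_measurable M \<Longrightarrow> (\<integral>x. g (T t x) \<partial>M) = (\<integral>x. g x \<partial>M)"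
proof -
  assume g: "g \<in> borel_measurable M"
  have "(\<integral>x. g x \<partial>M) = (\<integral>x. g x \<partial>distr M M (T t))" using Tpres by simp
  also have "\<dots> = (\<integral>x. g (T t x) \<partial>M)" by (rule integral_distr[OF Tmeas[of t] g])
  finally show ?thesis by simp
qed

lemma integrable_T: "integrable M (g::_\<Rightarrow>real) \<Longrightarrow> integrable M (\<lambda>x. g (T t x))"
proof -
  assume g: "integrable M g"
  hence "integrable (distr M M (T t)) g" using Tpres by simp
  thus ?thesis using integrable_distr_eq[OF Tmeas[of t], of g] g by auto
qed

lemma Tm'[measurable]: "(\<lambda>p. T (fst p) (snd p)) \<in> measurable (lborel \<Otimes>\<^sub>M M) M"
  using Tm by (simp add: case_prod_beta')

lemma Tmeas'[measurable]: "T t \<in> measurable M M" by (rule Tmeas)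

lemma joint_meas[measurable]: "g \<in> borel_measurable M \<Longrightarrow> (\<lambda>p. g (T (fst p) (snd p))) \<in> borel_measurable (lborel \<Otimes>\<^sub>M M)"
  by (rule measurable_compose[OF Tm'])

end


context fl begin

lemma Tswap_meas[measurable]: "(\<lambda>p. T (snd p) (fst p)) \<in> measurable (M \<Otimes>\<^sub>M lborel) M"
proof -
  have "(\<lambda>p. (snd p, fst p)) \<in> measurable (M \<Otimes>\<^sub>M lborel) (lborel \<Otimes>\<^sub>M M)" by measurable
  from measurable_compose[OF this Tm'] show ?thesis by simp
qed

lemma Torb_meas[measurable]: "(\<lambda>r. T r x) \<in> measurable lborel M"
proof -
  have "(\<lambda>r. (r, x)) \<in> measurable lborel (lborel \<Otimes>\<^sub>M M)"
    by (auto simp: space_M intro!: measurable_Pair)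
  from measurable_compose[OF this Tm'] show ?thesis by simp
qed

lemma fub:
  fixes g :: "'a \<Rightarrow> ennreal"
  assumes g[measurable]: "g \<in> borel_measurable M" and ab: "a \<le> b"
  shows "(\<integral>\<^sup>+x. \<integral>\<^sup>+s. indicator {a..b} s * g (T s x) \<partial>lborel \<partial>M) = ennreal (b - a) * (\<integral>\<^sup>+x. g x \<partial>M)"
proof -
  interpret pair_sigma_finite lborel M by unfold_locales
  have m: "(\<lambda>p. indicator {a..b} (fst p) * g (T (fst p) (snd p))) \<in> borel_measurable (lborel \<Otimes>\<^sub>M M)"
    by measurable
  have "(\<integral>\<^sup>+x. \<integral>\<^sup>+s. indicator {a..b} s * g (T s x) \<partial>lborel \<partial>M)
      = (\<integral>\<^sup>+s. \<integral>\<^sup>+x. indicator {a..b} s * g (T s x) \<partial>M \<partial>lborel)"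
    by (rule Fubini') (use m in \<open>simp add: case_prod_beta'\<close>)
  also have "\<dots> = (\<integral>\<^sup>+s. indicator {a..b} s * (\<integral>\<^sup>+x. g x \<partial>M) \<partial>lborel)"
    by (intro nn_integral_cong) (simp add: nn_integral_cmult nn_integral_T)
  also have "\<dots> = (\<integral>\<^sup>+x. g x \<partial>M) * ennreal (b - a)"
    by (subst nn_integral_multc) (use ab in \<open>auto simp: mult.commute\<close>)
  finally show ?thesis by (simp add: mult.commute)
qed

definition occN :: "'a \<Rightarrow> 'a set \<Rightarrow> real \<Rightarrow> real \<Rightarrow> ennreal" where
  "occN x U a b = (\<integral>\<^sup>+r. indicator {a..b} r * indicator U (T r x) \<partial>lborel)"

lemma occN_meas[measurable]: "U \<in> sets M \<Longrightarrow> (\<lambda>x. occN x U a b) \<in> borel_measurable M"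
proof -
  assume U: "U \<in> sets M"
  have [measurable]: "Measurable.pred (M \<Otimes>\<^sub>M lborel) (\<lambda>p. T (snd p) (fst p) \<in> U)"
    by (rule pred_sets2[OF U Tswap_meas])
  show ?thesis unfolding occN_def by measurable
qed

lemma occN_le: "a \<le> b \<Longrightarrow> occN x U a b \<le> ennreal (b - a)"
proof -
  assume ab: "a \<le> b"
  have "occN x U a b \<le> (\<integral>\<^sup>+r. indicator {a..b} r \<partial>lborel)"
    unfolding occN_def by (intro nn_integral_mono) (auto simp: indicator_def)
  also have "\<dots> = ennreal (b - a)" using ab by simp
  finally show ?thesis .
qed

lemma occN_fin: "occN x U a b \<noteq> \<infinity>"
proof (cases "a \<le> b")
  case True thus ?thesis using occN_le[OF True, of x U] by (auto simp: top_unique)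
next
  case False
  hence "{a..b} = {}" by auto
  thus ?thesis by (simp add: occN_def)
qed

lemma occN_shift: "U \<in> sets M \<Longrightarrow> occN (T c x) U a b = occN x U (a + c) (b + c)"
proof -
  assume U: "U \<in> sets M"
  have "occN x U (a + c) (b + c) = (\<integral>\<^sup>+r. indicator {a+c..b+c} (c + 1 * r) * indicator U (T (c + 1 * r) x) \<partial>lborel)"
    unfolding occN_def
    by (subst nn_integral_real_affine[where c=1 and t=c]) (use U in auto)
  also have "\<dots> = occN (T c x) U a b"
    unfolding occN_def
    by (intro nn_integral_cong) (auto simp: indicator_def Tadd[symmetric] add.commute)
  finally show ?thesis by simp
qed

lemma occN_lip1:
  assumes "a \<le> b" "0 \<le> h" and U[measurable]: "U \<in> sets M"
  shows "occN x U a (a + h) \<le> occN x U b (b + h) + ennreal (b - a)"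
proof -
  have "occN x U a (a + h) \<le> (\<integral>\<^sup>+r. indicator {b..b+h} r * indicator U (T r x) + indicator {a..b} r \<partial>lborel)"
    unfolding occN_def using assms by (intro nn_integral_mono) (auto simp: indicator_def)
  also have "\<dots> = occN x U b (b + h) + (\<integral>\<^sup>+r. indicator {a..b} r \<partial>lborel)"
    unfolding occN_def by (subst nn_integral_add) auto
  also have "\<dots> = occN x U b (b + h) + ennreal (b - a)" using assms by simp
  finally show ?thesis .
qed

lemma occN_lip2:
  assumes "a \<le> b" "0 \<le> h" and U[measurable]: "U \<in> sets M"
  shows "occN x U b (b + h) \<le> occN x U a (a + h) + ennreal (b - a)"
proof -
  have "occN x U b (b + h) \<le> (\<integral>\<^sup>+r. indicator {a..a+h} r * indicator U (T r x) + indicator {a+h..b+h} r \<partial>lborel)"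
    unfolding occN_def using assms by (intro nn_integral_mono) (auto simp: indicator_def)
  also have "\<dots> = occN x U a (a + h) + (\<integral>\<^sup>+r. indicator {a+h..b+h} r \<partial>lborel)"
    unfolding occN_def by (subst nn_integral_add) auto
  also have "\<dots> = occN x U a (a + h) + ennreal (b - a)" using assms by simp
  finally show ?thesis .
qed

definition occ :: "'a \<Rightarrow> 'a set \<Rightarrow> real \<Rightarrow> real \<Rightarrow> real" where
  "occ x U a b = enn2real (occN x U a b)"

lemma occ_lip:
  assumes "0 \<le> h" and U: "U \<in> sets M"
  shows "\<bar>occ x U a (a + h) - occ x U b (b + h)\<bar> \<le> \<bar>a - b\<bar>"
proof -
  have *: "\<bar>occ x U a (a + h) - occ x U b (b + h)\<bar> \<le> b - a" if ab: "a \<le> b" for a b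
  proof -
    have f1: "occN x U a (a + h) \<noteq> \<infinity>" "occN x U b (b + h) \<noteq> \<infinity>" by (rule occN_fin)+
    have 1: "occ x U a (a + h) \<le> occ x U b (b + h) + (b - a)"
    proof -
      have "occ x U a (a + h) \<le> enn2real (occN x U b (b + h) + ennreal (b - a))"
        unfolding occ_def by (rule enn2real_mono[OF occN_lip1[OF ab assms(1) U]]) (use f1 in \<open>simp add: less_top[symmetric]\<close>)
      also have "\<dots> = occ x U b (b + h) + (b - a)"
        unfolding occ_def using f1 ab by (subst enn2real_plus) (auto simp: less_top[symmetric])
      finally show ?thesis .
    qed
    have 2: "occ x U b (b + h) \<le> occ x U a (a + h) + (b - a)"
    proof -
      have "occ x U b (b + h) \<le> enn2real (occN x U a (a + h) + ennreal (b - a))"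
        unfolding occ_def by (rule enn2real_mono[OF occN_lip2[OF ab assms(1) U]]) (use f1 in \<open>simp add: less_top[symmetric]\<close>)
      also have "\<dots> = occ x U a (a + h) + (b - a)"
        unfolding occ_def using f1 ab by (subst enn2real_plus) (auto simp: less_top[symmetric])
      finally show ?thesis .
    qed
    from 1 2 show ?thesis by linarith
  qed
  show ?thesis
  proof (cases "a \<le> b")
    case True thus ?thesis using *[OF True] by linarith
  next
    case False thus ?thesis using *[of b a] by linarith
  qed
qed

end



lemma lebesgue_lborel_emeasure: "S \<in> sets borel \<Longrightarrow> emeasure lebesgue S = emeasure (lborel::real measure) S"
  by (simp add: emeasure_completion main_part_sets)

lemma lusin_pos:
  fixes \<Phi> :: "real \<Rightarrow> 'a::second_countable_topology"
  assumes \<Phi>[measurable]: "\<Phi> \<in> borel_measurable borel" and ab: "a < b"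
  shows "\<exists>K. compact K \<and> K \<subseteq> {a..b} \<and> emeasure lborel K > 0 \<and> continuous_on K \<Phi>"
proof -
  obtain B :: "'a set set" where B: "countable B" "topological_basis B" using ex_countable_basis by auto
  have Bne: "B \<noteq> {}"
  proof
    assume "B = {}"
    with B(2) have "\<And>S. open S \<Longrightarrow> S = {}" unfolding topological_basis_def by auto
    thus False using open_UNIV by auto
  qed
  define bs where "bs = from_nat_into B"
  have rbs: "range bs = B" unfolding bs_def using Bne B(1) by simp
  have bs_open: "open (bs n)" for n using rbs B(2) unfolding topological_basis_def by auto
  define \<epsilon> :: "nat \<Rightarrow> real" where "\<epsilon> n = (b - a) / 8 * (1/2)^n" for n
  have epos: "\<epsilon> n > 0" for n using ab by (simp add: \<epsilon>_def)
  define E where "E n = {a..b} \<inter> \<Phi> -` bs n" for n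
  have E_borel[measurable]: "E n \<in> sets borel" for n
    unfolding E_def using bs_open[of n] by (intro sets.Int) (auto intro!: measurable_sets_borel[OF \<Phi>])
  have "\<forall>n. \<exists>F1. closed F1 \<and> F1 \<subseteq> E n \<and> emeasure lborel (E n - F1) < ennreal (\<epsilon> n)"
  proof
    fix n
    obtain F1 where F1: "closed F1" "F1 \<subseteq> E n" "E n - F1 \<in> lmeasurable" "emeasure lebesgue (E n - F1) < ennreal (\<epsilon> n)"
      using sets_lebesgue_inner_closed[of "E n" "\<epsilon> n"] epos[of n] E_borel[of n] by auto
    have "E n - F1 \<in> sets borel" using F1(1) by auto
    thus "\<exists>F1. closed F1 \<and> F1 \<subseteq> E n \<and> emeasure lborel (E n - F1) < ennreal (\<epsilon> n)"
      using F1 lebesgue_lborel_emeasure by auto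
  qed
  then obtain F1 where F1: "\<And>n. closed (F1 n)" "\<And>n. F1 n \<subseteq> E n" "\<And>n. emeasure lborel (E n - F1 n) < ennreal (\<epsilon> n)"
    by metis
  have "\<forall>n. \<exists>F2. closed F2 \<and> F2 \<subseteq> {a..b} - E n \<and> emeasure lborel ({a..b} - E n - F2) < ennreal (\<epsilon> n)"
  proof
    fix n
    have m: "{a..b} - E n \<in> sets borel" by auto
    obtain F2 where F2: "closed F2" "F2 \<subseteq> {a..b} - E n" "{a..b} - E n - F2 \<in> lmeasurable" "emeasure lebesgue ({a..b} - E n - F2) < ennreal (\<epsilon> n)"
      using sets_lebesgue_inner_closed[of "{a..b} - E n" "\<epsilon> n"] epos[of n] m by auto
    have "{a..b} - E n - F2 \<in> sets borel" using F2(1) by auto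
    thus "\<exists>F2. closed F2 \<and> F2 \<subseteq> {a..b} - E n \<and> emeasure lborel ({a..b} - E n - F2) < ennreal (\<epsilon> n)"
      using F2 lebesgue_lborel_emeasure by auto
  qed
  then obtain F2 where F2: "\<And>n. closed (F2 n)" "\<And>n. F2 n \<subseteq> {a..b} - E n" "\<And>n. emeasure lborel ({a..b} - E n - F2 n) < ennreal (\<epsilon> n)"
    by metis
  define K where "K = {a..b} \<inter> (\<Inter>n. F1 n \<union> F2 n)"
  have Kc: "closed K" unfolding K_def using F1(1) F2(1) by (intro closed_Int closed_INT closed_Un) auto
  have "bounded K" unfolding K_def by (rule bounded_subset[OF bounded_closed_interval]) auto
  hence Kcomp: "compact K" using Kc by (simp add: compact_eq_bounded_closed)
  have Ksub: "K \<subseteq> {a..b}" unfolding K_def by auto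
  have Kborel[measurable]: "K \<in> sets borel" using Kc by auto
  have diff_sub: "{a..b} - K \<subseteq> (\<Union>n. (E n - F1 n) \<union> ({a..b} - E n - F2 n))"
    unfolding K_def by auto
  have "emeasure lborel ({a..b} - K) \<le> emeasure lborel (\<Union>n. (E n - F1 n) \<union> ({a..b} - E n - F2 n))"
    by (intro emeasure_mono[OF diff_sub]) (use F1(1) F2(1) in auto)
  also have "\<dots> \<le> (\<Sum>n. emeasure lborel ((E n - F1 n) \<union> ({a..b} - E n - F2 n)))"
    by (intro emeasure_subadditive_countably) (use F1(1) F2(1) in auto)
  also have "\<dots> \<le> (\<Sum>n. ennreal (2 * \<epsilon> n))"
  proof (intro suminf_le)
    fix n
    have "emeasure lborel ((E n - F1 n) \<union> ({a..b} - E n - F2 n)) \<le> emeasure lborel (E n - F1 n) + emeasure lborel ({a..b} - E n - F2 n)"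
      by (intro emeasure_subadditive) (use F1(1) F2(1) in auto)
    also have "\<dots> \<le> ennreal (\<epsilon> n) + ennreal (\<epsilon> n)"
      using F1(3)[of n] F2(3)[of n] by (intro add_mono) auto
    also have "\<dots> = ennreal (2 * \<epsilon> n)" using epos[of n] by (simp add: ennreal_plus[symmetric])
    finally show "emeasure lborel ((E n - F1 n) \<union> ({a..b} - E n - F2 n)) \<le> ennreal (2 * \<epsilon> n)" .
  qed auto
  also have "\<dots> = ennreal (\<Sum>n. 2 * \<epsilon> n)"
  proof -
    have "summable (\<lambda>n. 2 * \<epsilon> n)" unfolding \<epsilon>_def by (intro summable_mult summable_geometric) auto
    thus ?thesis using epos by (intro suminf_ennreal2) (auto simp: less_imp_le)
  qed
  also have "(\<Sum>n. 2 * \<epsilon> n) = (b - a) / 2"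
  proof -
    have "(\<Sum>n. 2 * \<epsilon> n) = (b - a) / 4 * (\<Sum>n. (1/2::real)^n)"
    proof -
      have "(\<lambda>n. 2 * \<epsilon> n) = (\<lambda>n. (b - a) / 4 * (1/2::real)^n)" unfolding \<epsilon>_def by (auto simp: field_simps)
      moreover have "(\<Sum>n. (b - a) / 4 * (1/2::real)^n) = (b - a) / 4 * (\<Sum>n. (1/2::real)^n)"
        by (rule suminf_mult) (simp add: summable_geometric)
      ultimately show ?thesis by simp
    qed
    also have "\<dots> = (b - a) / 2" by (simp add: suminf_geometric)
    finally show ?thesis .
  qed
  finally have dK: "emeasure lborel ({a..b} - K) \<le> ennreal ((b - a) / 2)" .
  have "ennreal (b - a) = emeasure lborel {a..b}" using ab by simp
  also have "\<dots> \<le> emeasure lborel K + emeasure lborel ({a..b} - K)"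
    by (rule order_trans[OF emeasure_mono emeasure_subadditive]) auto
  also have "\<dots> \<le> emeasure lborel K + ennreal ((b - a) / 2)" using dK by (intro add_left_mono)
  finally have le: "ennreal (b - a) \<le> emeasure lborel K + ennreal ((b - a) / 2)" .
  have Kpos: "emeasure lborel K > 0"
  proof (rule ccontr)
    assume "\<not> 0 < emeasure lborel K"
    hence "emeasure lborel K = 0" by (simp add: not_gr_zero)
    with le have "ennreal (b - a) \<le> ennreal ((b - a) / 2)" by simp
    hence "b - a \<le> (b - a) / 2" using ab by (subst (asm) ennreal_le_iff) auto
    thus False using ab by (simp add: field_simps)
  qed
  have inv: "\<Phi> -` bs n \<inter> K = (- F2 n) \<inter> K" for n
  proof -
    have "K \<subseteq> F1 n \<union> F2 n" unfolding K_def by auto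
    moreover have "F1 n \<subseteq> \<Phi> -` bs n" using F1(2)[of n] unfolding E_def by auto
    moreover have "F2 n \<inter> \<Phi> -` bs n = {}" using F2(2)[of n] Ksub unfolding E_def by auto
    ultimately show ?thesis by auto
  qed
  have cont: "continuous_on K \<Phi>"
    unfolding continuous_on_open_invariant
  proof (intro allI impI)
    fix V :: "'a set" assume "open V"
    then obtain B' where B': "B' \<subseteq> B" "\<Union>B' = V" using B(2) unfolding topological_basis_def by auto
    define N where "N = {n. bs n \<in> B'}"
    have "V = (\<Union>n\<in>N. bs n)" unfolding N_def using B'(1) rbs B'(2) by auto
    hence "\<Phi> -` V \<inter> K = (\<Union>n\<in>N. - F2 n) \<inter> K" using inv by auto
    moreover have "open (\<Union>n\<in>N. - F2 n)" using F2(1) by auto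
    ultimately show "\<exists>A. open A \<and> A \<inter> K = \<Phi> -` V \<inter> K" by metis
  qed
  show ?thesis using Kcomp Ksub Kpos cont by blast
qed




lemma exU: "\<exists>U::'a::second_countable_topology set set. countable U \<and> Int_stable U \<and> UNIV \<in> U \<and> topological_basis U"
proof -
  obtain B :: "'a set set" where B: "countable B" "topological_basis B" using ex_countable_basis by auto
  define U where "U = Inter ` {F. finite F \<and> F \<subseteq> B}"
  have "countable U" unfolding U_def by (intro countable_image countable_Collect_finite_subset B)
  moreover have "Int_stable U"
    unfolding Int_stable_def U_def
  proof safe
    fix F G assume "finite F" "F \<subseteq> B" "finite G" "G \<subseteq> B"
    thus "\<Inter>F \<inter> \<Inter>G \<in> Inter ` {F. finite F \<and> F \<subseteq> B}"
      by (intro image_eqI[of _ _ "F \<union> G"]) auto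
  qed
  moreover have "UNIV \<in> U" unfolding U_def by (intro image_eqI[of _ _ "{}"]) auto
  moreover have "topological_basis U"
    unfolding topological_basis_def
  proof safe
    fix b assume "b \<in> U"
    then obtain F where "b = \<Inter>F" "finite F" "F \<subseteq> B" unfolding U_def by auto
    thus "open b" using B(2) unfolding topological_basis_def by (auto intro!: open_Inter)
  next
    fix x :: "'a set" assume "open x"
    then obtain B' where "B' \<subseteq> B" "\<Union>B' = x" using B(2) unfolding topological_basis_def by auto
    moreover have "B' \<subseteq> U" unfolding U_def using \<open>B' \<subseteq> B\<close> by (auto intro!: image_eqI[of _ _ "{b}" for b])
    ultimately show "\<exists>B'\<subseteq>U. \<Union>B' = x" by auto
  qed
  ultimately show ?thesis by blast
qed

lemma lip_cont: "(\<And>a b. \<bar>f a - f b\<bar> \<le> \<bar>a - b\<bar>) \<Longrightarrow> continuous_on S (f :: real \<Rightarrow> real)"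
  unfolding continuous_on_iff dist_real_def by (metis le_less_trans)

context fl begin

definition UU :: "'a set set" where
  "UU = (SOME U::'a set set. countable U \<and> Int_stable U \<and> UNIV \<in> U \<and> topological_basis U)"

lemma UU: "countable UU" "Int_stable UU" "UNIV \<in> UU" "topological_basis UU"
  using someI_ex[OF exU] unfolding UU_def by blast+

lemma UU_sets: "U \<in> UU \<Longrightarrow> U \<in> sets M"
  using UU(4) unfolding topological_basis_def by (auto simp: sets_M)

lemma sets_M_UU: "sets M = sigma_sets UNIV UU"
proof -
  have "borel = sigma UNIV UU" by (rule borel_eq_countable_basis[OF UU(1) UU(4)])
  hence "sets (borel::'a measure) = sets (sigma UNIV UU)" by simp
  thus ?thesis using sets_M by (simp add: sets_measure_of)
qed

lemma sep_occN:
  assumes inj: "\<forall>t>0. T t x \<noteq> x" and s: "1 \<le> s"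
  shows "\<exists>U\<in>UU. occN x U 0 (1/2) \<noteq> occN x U s (s + 1/2)"
proof (rule ccontr)
  assume "\<not> ?thesis"
  hence eq: "\<And>U. U \<in> UU \<Longrightarrow> occN x U 0 (1/2) = occN x U s (s + 1/2)" by auto
  define \<Phi> where "\<Phi> = (\<lambda>r. T r x)"
  have \<Phi>m: "\<Phi> \<in> borel_measurable borel"
    using Torb_meas[of x] unfolding \<Phi>_def by (simp add: measurable_cong_sets[OF refl sets_M])
  have \<Phi>m': "\<Phi> \<in> measurable (density lborel f) borel" for f
    using \<Phi>m by (simp add: measurable_cong_sets[OF sets_density refl])
  define \<nu>1 where "\<nu>1 = distr (density lborel (indicator {0..1/2})) borel \<Phi>"
  define \<nu>2 where "\<nu>2 = distr (density lborel (indicator {s..s+1/2})) borel \<Phi>"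
  have e: "emeasure (distr (density lborel (indicator {a..b})) borel \<Phi>) A = occN x A a b"
    if A: "A \<in> sets borel" for A a b
  proof -
    have "emeasure (distr (density lborel (indicator {a..b})) borel \<Phi>) A
        = emeasure (density lborel (indicator {a..b})) (\<Phi> -` A)"
      using A \<Phi>m' by (simp add: emeasure_distr)
    also have "\<dots> = (\<integral>\<^sup>+r. indicator {a..b} r * indicator (\<Phi> -` A) r \<partial>lborel)"
      using A \<Phi>m by (subst emeasure_density) (auto intro: measurable_sets_borel)
    also have "\<dots> = occN x A a b"
      unfolding occN_def \<Phi>_def by (intro nn_integral_cong) (auto simp: indicator_def)
    finally show ?thesis .
  qed
  have "\<nu>1 = \<nu>2"
  proof (rule measure_eqI_generator_eq_countable[of UU UNIV _ _ "{UNIV}"])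
    show "Int_stable UU" by (rule UU(2))
    show "UU \<subseteq> Pow UNIV" by auto
    show "emeasure \<nu>1 X = emeasure \<nu>2 X" if X: "X \<in> UU" for X
    proof -
      have "X \<in> sets borel" using UU_sets[OF X] by (simp add: sets_M)
      thus ?thesis unfolding \<nu>1_def \<nu>2_def using e eq[OF X] by simp
    qed
    show "sets \<nu>1 = sigma_sets UNIV UU" "sets \<nu>2 = sigma_sets UNIV UU"
      unfolding \<nu>1_def \<nu>2_def using sets_M_UU sets_M by auto
    show "{UNIV} \<subseteq> UU" using UU(3) by auto
    show "\<Union>{UNIV} = UNIV" by simp
    show "countable {UNIV}" by simp
    show "emeasure \<nu>1 a \<noteq> \<infinity>" if "a \<in> {UNIV}" for a
      using that occN_fin[of x UNIV 0 "1/2"] unfolding \<nu>1_def by (simp add: e)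
  qed
  obtain K where K: "compact K" "K \<subseteq> {0..1/2}" "emeasure lborel K > 0" "continuous_on K \<Phi>"
    using lusin_pos[OF \<Phi>m, of 0 "1/2"] by auto
  have cK: "compact (\<Phi> ` K)" by (rule compact_continuous_image[OF K(4) K(1)])
  hence bK: "\<Phi> ` K \<in> sets borel" by (auto intro: borel_closed compact_imp_closed)
  have "emeasure lborel K \<le> occN x (\<Phi> ` K) 0 (1/2)"
    unfolding occN_def
  proof (subst nn_integral_indicator[symmetric])
    show "K \<in> sets lborel" using K(1) by (auto intro: borel_closed compact_imp_closed)
    show "integral\<^sup>N lborel (indicator K) \<le> (\<integral>\<^sup>+r. indicator {0..1/2} r * indicator (\<Phi> ` K) (T r x) \<partial>lborel)"
      using K(2) by (intro nn_integral_mono) (auto simp: indicator_def \<Phi>_def)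
  qed
  hence pos: "emeasure \<nu>1 (\<Phi> ` K) > 0" unfolding \<nu>1_def using e[OF bK] K(3) by simp
  have z: "indicator {s..s+1/2} r * indicator (\<Phi> ` K) (T r x) = (0::ennreal)" for r
  proof (cases "r \<in> {s..s+1/2} \<and> T r x \<in> \<Phi> ` K")
    case True
    then obtain k where k: "k \<in> K" "T r x = T k x" unfolding \<Phi>_def by auto
    have "k \<le> 1/2" using k(1) K(2) by auto
    hence "r - k > 0" using True s by auto
    moreover have "T (r - k) x = x"
    proof -
      have "T (r - k) x = T (-k) (T r x)" using Tadd[of "-k" r x] by simp
      also have "\<dots> = x" using k(2) TT_inv by simp
      finally show ?thesis .
    qed
    ultimately show ?thesis using inj by auto
  qed (auto simp: indicator_def)
  have "occN x (\<Phi> ` K) s (s + 1/2) = 0" unfolding occN_def by (simp add: z)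
  hence "emeasure \<nu>2 (\<Phi> ` K) = 0" unfolding \<nu>2_def using e[OF bK] by simp
  thus False using pos \<open>\<nu>1 = \<nu>2\<close> by simp
qed

definition u :: "'a set \<Rightarrow> 'a \<Rightarrow> real" where
  "u U y = occ y U 0 (1/2)"

lemma u_meas[measurable]: "U \<in> sets M \<Longrightarrow> u U \<in> borel_measurable M"
  unfolding u_def occ_def by measurable

lemma u_shift: "U \<in> sets M \<Longrightarrow> u U (T s y) = occ y U s (s + 1/2)"
  unfolding u_def occ_def by (simp add: occN_shift add.commute)

lemma u_cont: "U \<in> sets M \<Longrightarrow> continuous_on S (\<lambda>s. u U (T s y))"
  by (intro lip_cont) (simp add: u_shift occ_lip)

lemma u_bounds: "0 \<le> u U y" "u U y \<le> 1/2"
proof -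
  show "0 \<le> u U y" unfolding u_def occ_def by simp
  have "occN y U 0 (1/2) \<le> ennreal (1/2)" using occN_le[of 0 "1/2" y U] by simp
  moreover have "occN y U 0 (1/2) = ennreal (u U y)"
    unfolding u_def occ_def using occN_fin[of y U 0 "1/2"] by (simp add: ennreal_enn2real_if)
  ultimately have "ennreal (u U y) \<le> ennreal (1/2)" by simp
  thus "u U y \<le> 1/2" by (subst (asm) ennreal_le_iff) auto
qed

lemma sep_u:
  assumes inj: "\<forall>t>0. T t x \<noteq> x" and s: "1 \<le> s"
  shows "\<exists>U\<in>UU. u U (T s x) \<noteq> u U x"
proof -
  obtain U where U: "U \<in> UU" "occN x U 0 (1/2) \<noteq> occN x U s (s + 1/2)" using sep_occN[OF assms] by auto
  have "u U (T s x) = enn2real (occN x U s (s + 1/2))" using UU_sets[OF U(1)] by (simp add: u_shift occ_def)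
  moreover have "u U x = enn2real (occN x U 0 (1/2))" by (simp add: u_def occ_def)
  moreover have "enn2real (occN x U s (s + 1/2)) \<noteq> enn2real (occN x U 0 (1/2))"
  proof
    assume eq: "enn2real (occN x U s (s + 1/2)) = enn2real (occN x U 0 (1/2))"
    have "occN x U s (s + 1/2) = ennreal (enn2real (occN x U s (s + 1/2)))"
      using occN_fin[of x U s "s + 1/2"] by (simp add: ennreal_enn2real_if)
    also have "\<dots> = ennreal (enn2real (occN x U 0 (1/2)))" using eq by simp
    also have "\<dots> = occN x U 0 (1/2)"
      using occN_fin[of x U 0 "1/2"] by (simp add: ennreal_enn2real_if)
    finally show False using U(2) by simp
  qed
  ultimately have "u U (T s x) \<noteq> u U x" by metis
  thus ?thesis using U(1) by blast
qed

end



lemma rat_approx: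
  fixes a b s e :: real
  assumes "a \<le> s" "s \<le> b" "a < b" "e > 0"
  shows "\<exists>q::rat. a \<le> of_rat q \<and> of_rat q \<le> b \<and> \<bar>of_rat q - s\<bar> < e"
proof (cases "s < b")
  case True
  obtain r where r: "r \<in> \<rat>" "s < r" "r < min b (s + e)" using Rats_dense_in_real[of s "min b (s + e)"] True assms by auto
  then obtain q where "r = of_rat q" by (auto elim: Rats_cases)
  thus ?thesis using r assms by (intro exI[of _ q]) auto
next
  case False
  hence sb: "s = b" using assms by auto
  obtain r where r: "r \<in> \<rat>" "max a (s - e) < r" "r < s" using Rats_dense_in_real[of "max a (s - e)" s] sb assms by auto
  then obtain q where "r = of_rat q" by (auto elim: Rats_cases)
  thus ?thesis using r assms by (intro exI[of _ q]) auto
qed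

context fl begin

definition sig :: "'a set set \<Rightarrow> 'a \<Rightarrow> real \<Rightarrow> real" where
  "sig F y s = (\<Sum>U\<in>F. \<bar>u U (T s y) - u U y\<bar>)"

lemma sig_cont: "F \<subseteq> UU \<Longrightarrow> continuous_on S (sig F y)"
  unfolding sig_def
  by (intro continuous_on_sum continuous_on_rabs continuous_on_diff continuous_on_const u_cont)
     (auto intro: UU_sets)

lemma sig_meas[measurable]: "F \<subseteq> UU \<Longrightarrow> (\<lambda>y. sig F y s) \<in> borel_measurable M"
  unfolding sig_def
  by (intro borel_measurable_sum borel_measurable_abs borel_measurable_diff
        measurable_compose[OF Tmeas u_meas] u_meas) (auto intro: UU_sets)

lemma finite_sep:
  assumes inj: "\<forall>t>0. T t x \<noteq> x" and L: "1 \<le> L"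
  shows "\<exists>F k. finite F \<and> F \<subseteq> UU \<and> k > (0::nat) \<and> (\<forall>s\<in>{1..L}. 1 / real k \<le> sig F x s)"
proof -
  define Ob where "Ob U = {s. u U (T s x) \<noteq> u U x}" for U
  have openO: "open B" if B: "B \<in> Ob ` UU" for B
  proof -
    obtain U where U: "U \<in> UU" "B = Ob U" using B by auto
    show ?thesis unfolding U(2) Ob_def
      by (intro open_Collect_neq u_cont continuous_on_const UU_sets U(1))
  qed
  have cov: "{1..L} \<subseteq> \<Union>(Ob ` UU)"
  proof
    fix s assume "s \<in> {1..L}"
    then obtain U where "U \<in> UU" "u U (T s x) \<noteq> u U x" using sep_u[OF inj, of s] by auto
    thus "s \<in> \<Union>(Ob ` UU)" unfolding Ob_def by auto
  qed
  obtain \<T> where T: "\<T> \<subseteq> Ob ` UU" "finite \<T>" "{1..L} \<subseteq> \<Union>\<T>"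
    using compactE[OF compact_Icc cov openO] by metis
  obtain F where F: "F \<subseteq> UU" "finite F" "\<T> = Ob ` F" using finite_subset_image[OF T(2) T(1)] by auto
  have pos: "sig F x s > 0" if s: "s \<in> {1..L}" for s
  proof -
    obtain U where U: "U \<in> F" "s \<in> Ob U" using T(3) s F(3) by auto
    show ?thesis unfolding sig_def
      by (rule sum_pos2[OF F(2) U(1)]) (use U(2) in \<open>auto simp: Ob_def\<close>)
  qed
  obtain s0 where s0: "s0 \<in> {1..L}" "\<And>s. s \<in> {1..L} \<Longrightarrow> sig F x s0 \<le> sig F x s"
    using continuous_attains_inf[OF compact_Icc _ sig_cont[OF F(1)], of 1 L x] L by auto
  obtain k :: nat where k: "k > 0" "inverse (real k) < sig F x s0" using ex_inverse_of_nat_less[OF pos[OF s0(1)]] by auto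
  show ?thesis
  proof (intro exI conjI ballI)
    show "finite F" "F \<subseteq> UU" "k > 0" using F k by auto
    fix s assume "s \<in> {1..L}"
    thus "1 / real k \<le> sig F x s" using s0(2)[of s] k(2) by (simp add: divide_inverse)
  qed
qed

definition G :: "'a set set \<Rightarrow> nat \<Rightarrow> real \<Rightarrow> 'a set" where
  "G F k L = {y. \<forall>q::rat. 1 \<le> real_of_rat q \<and> real_of_rat q \<le> L \<longrightarrow> 1 / real k \<le> sig F y (real_of_rat q)}"

lemma G_sets: "F \<subseteq> UU \<Longrightarrow> G F k L \<in> sets M"
proof -
  assume F: "F \<subseteq> UU"
  have [measurable]: "\<And>s. (\<lambda>y. sig F y s) \<in> borel_measurable M" using sig_meas[OF F] .
  have "Measurable.pred M (\<lambda>y. \<forall>q::rat. 1 \<le> real_of_rat q \<and> real_of_rat q \<le> L \<longrightarrow> 1 / real k \<le> sig F y (real_of_rat q))"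
    by measurable
  thus ?thesis unfolding G_def by (simp add: pred_def space_M)
qed

lemma G_all:
  assumes F: "F \<subseteq> UU" and y: "y \<in> G F k L" and s: "s \<in> {1..L}"
  shows "1 / real k \<le> sig F y s"
proof (rule ccontr)
  assume "\<not> ?thesis"
  hence lt: "sig F y s < 1 / real k" by simp
  have c: "continuous_on UNIV (sig F y)" by (rule sig_cont[OF F])
  obtain d where d: "d > 0" "\<And>t. dist t s < d \<Longrightarrow> dist (sig F y t) (sig F y s) < 1 / real k - sig F y s"
    using c lt unfolding continuous_on_iff by (metis UNIV_I diff_gt_0_iff_gt)
  obtain q :: rat where q: "1 \<le> real_of_rat q" "real_of_rat q \<le> L" "\<bar>real_of_rat q - s\<bar> < d"
  proof (cases "L = 1")
    case True
    hence "s = 1" using s by auto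
    show ?thesis by (rule that[of 1]) (use True \<open>s = 1\<close> d in auto)
  next
    case False
    hence "1 < L" using s by auto
    thus ?thesis using rat_approx[of 1 s L d] s d that by auto
  qed
  have "sig F y (of_rat q) < 1 / real k"
    using d(2)[of "of_rat q"] q(3) by (auto simp: dist_real_def)
  moreover have "1 / real k \<le> sig F y (of_rat q)" using y q unfolding G_def by auto
  ultimately show False by simp
qed

lemma exists_G:
  assumes ap: "AE x in M. \<forall>t>0. T t x \<noteq> x" and L: "1 \<le> L"
  shows "\<exists>F k. finite F \<and> F \<subseteq> UU \<and> k > 0 \<and> emeasure M (G F k L) > 0"
proof (rule ccontr)
  assume na: "\<not> ?thesis"
  have z: "emeasure M (G F k L) = 0" if "finite F" "F \<subseteq> UU" "k > 0" for F k
    using na that by (metis not_gr_zero)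
  define I where "I = {F. finite F \<and> F \<subseteq> UU} \<times> {k::nat. k > 0}"
  have cI: "countable I" unfolding I_def by (intro countable_SIGMA countable_Collect_finite_subset UU(1)) auto
  have "\<forall>p\<in>I. AE x in M. x \<notin> G (fst p) (snd p) L"
  proof
    fix p assume "p \<in> I"
    hence "G (fst p) (snd p) L \<in> null_sets M" using z G_sets unfolding I_def by (auto simp: null_sets_def)
    thus "AE x in M. x \<notin> G (fst p) (snd p) L" by (rule AE_not_in)
  qed
  hence "AE x in M. \<forall>p\<in>I. x \<notin> G (fst p) (snd p) L" by (subst AE_ball_countable[OF cI])
  hence "AE x in M. False" using ap
  proof eventually_elim
    case (elim x)
    show False
    proof (cases "\<forall>t>0. T t x \<noteq> x")
      case True
      obtain F k where Fk: "finite F" "F \<subseteq> UU" "k > 0" "\<forall>s\<in>{1..L}. 1 / real k \<le> sig F x s"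
        using finite_sep[OF True L] by auto
      have "x \<in> G F k L" unfolding G_def using Fk(4) by auto
      moreover have "(F, k) \<in> I" unfolding I_def using Fk by auto
      ultimately show False using elim by auto
    next
      case False thus False using elim by auto
    qed
  qed
  thus False using emeasure_space_1 by (simp add: AE_False)
qed

end


context fl begin

lemma no_return:
  assumes ap: "AE x in M. \<forall>t>0. T t x \<noteq> x" and L: "1 \<le> L"
  shows "\<exists>D0\<in>sets M. emeasure M D0 > 0 \<and> (\<forall>y\<in>D0. \<forall>s\<in>{1..L}. T s y \<notin> D0)"
proof -
  obtain F k where Fk: "finite F" "F \<subseteq> UU" "k > 0" "emeasure M (G F k L) > 0"
    using exists_G[OF ap L] by auto
  define N where "N = real k * (real (card F) + 1)"
  have Npos: "N > 0" unfolding N_def using Fk(3) by (simp add: add_pos_nonneg)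
  define Cell where "Cell c = {y. \<forall>U\<in>F. real_of_int (c U) \<le> u U y * N \<and> u U y * N < real_of_int (c U) + 1}"
    for c :: "'a set \<Rightarrow> int"
  define C where "C = PiE F (\<lambda>_. {0..\<lfloor>N\<rfloor>})"
  have finC: "finite C" unfolding C_def using Fk(1) by (intro finite_PiE) auto
  have Cell_sets: "Cell c \<in> sets M" for c
  proof -
    have "Measurable.pred M (\<lambda>y. \<forall>U\<in>F. real_of_int (c U) \<le> u U y * N \<and> u U y * N < real_of_int (c U) + 1)"
    proof (rule pred_intros_finite(3)[OF Fk(1)])
      fix U assume "U \<in> F"
      hence [measurable]: "u U \<in> borel_measurable M" using Fk(2) by (intro u_meas UU_sets) auto
      show "Measurable.pred M (\<lambda>y. real_of_int (c U) \<le> u U y * N \<and> u U y * N < real_of_int (c U) + 1)"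
        by measurable
    qed
    thus ?thesis unfolding Cell_def by (simp add: pred_def space_M)
  qed
  have Gs: "G F k L \<in> sets M" using G_sets[OF Fk(2)] .
  have cover: "G F k L \<subseteq> (\<Union>c\<in>C. G F k L \<inter> Cell c)"
  proof
    fix y assume y: "y \<in> G F k L"
    define c where "c = restrict (\<lambda>U. \<lfloor>u U y * N\<rfloor>) F"
    have "c \<in> C"
    proof -
      have "0 \<le> \<lfloor>u U y * N\<rfloor> \<and> \<lfloor>u U y * N\<rfloor> \<le> \<lfloor>N\<rfloor>" for U
      proof -
        have "0 \<le> u U y * N" using u_bounds(1) Npos by simp
        moreover have "u U y * N \<le> N" using u_bounds(2)[of U y] Npos by (simp add: mult_le_cancel_right1)
        ultimately show ?thesis by (auto intro: floor_mono)
      qed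
      thus ?thesis unfolding c_def C_def by auto
    qed
    moreover have "y \<in> Cell c"
      unfolding Cell_def c_def using floor_correct by auto
    ultimately show "y \<in> (\<Union>c\<in>C. G F k L \<inter> Cell c)" using y by auto
  qed
  have "\<exists>c\<in>C. emeasure M (G F k L \<inter> Cell c) > 0"
  proof (rule ccontr)
    assume "\<not> ?thesis"
    hence z: "\<And>c. c \<in> C \<Longrightarrow> emeasure M (G F k L \<inter> Cell c) = 0" by (auto simp: not_gr_zero)
    have "emeasure M (G F k L) \<le> emeasure M (\<Union>c\<in>C. G F k L \<inter> Cell c)"
      by (rule emeasure_mono[OF cover]) (use finC Gs Cell_sets in auto)
    also have "\<dots> \<le> (\<Sum>c\<in>C. emeasure M (G F k L \<inter> Cell c))"
      by (rule emeasure_subadditive_finite[OF finC]) (use Gs Cell_sets in auto)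
    also have "\<dots> = 0" using z by simp
    finally show False using Fk(4) by simp
  qed
  then obtain c where c: "c \<in> C" "emeasure M (G F k L \<inter> Cell c) > 0" by auto
  have noret: "T s y \<notin> G F k L \<inter> Cell c" if y: "y \<in> G F k L \<inter> Cell c" and s: "s \<in> {1..L}" for y s
  proof
    assume Ty: "T s y \<in> G F k L \<inter> Cell c"
    have each: "\<bar>u U (T s y) - u U y\<bar> \<le> 1 / N" if U: "U \<in> F" for U
    proof -
      have a: "real_of_int (c U) \<le> u U y * N" "u U y * N < real_of_int (c U) + 1"
        using y U unfolding Cell_def by auto
      have b: "real_of_int (c U) \<le> u U (T s y) * N" "u U (T s y) * N < real_of_int (c U) + 1"
        using Ty U unfolding Cell_def by auto
      have "\<bar>u U (T s y) * N - u U y * N\<bar> \<le> 1" using a b by linarith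
      hence "\<bar>u U (T s y) - u U y\<bar> * N \<le> 1" using Npos by (simp add: abs_mult left_diff_distrib[symmetric])
      thus ?thesis using Npos by (simp add: field_simps)
    qed
    have "sig F y s \<le> (\<Sum>U\<in>F. 1 / N)" unfolding sig_def by (intro sum_mono each)
    also have "\<dots> = real (card F) / N" by simp
    also have "\<dots> < 1 / real k"
    proof -
      have kpos: "real k > 0" using Fk(3) by simp
      have "real (card F) * real k < N" unfolding N_def using kpos by (simp add: algebra_simps)
      thus ?thesis using Npos kpos by (simp add: field_simps)
    qed
    finally have "sig F y s < 1 / real k" .
    moreover have "1 / real k \<le> sig F y s" using G_all[OF Fk(2) _ s] y by auto
    ultimately show False by simp
  qed
  show ?thesis
    by (intro bexI[of _ "G F k L \<inter> Cell c"] conjI c(2) ballI noret) (use Gs Cell_sets in auto)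
qed

end



locale flD = fl M T for M :: "'a::polish_space measure" and T +
  fixes D0 :: "'a set" and L :: nat
  assumes D0s[measurable]: "D0 \<in> sets M" and D0pos: "emeasure M D0 > 0"
  and Lpos: "L \<ge> 1"
  and noret: "\<And>y s. y \<in> D0 \<Longrightarrow> 1 \<le> s \<Longrightarrow> s \<le> real L + 3 \<Longrightarrow> T s y \<notin> D0"
  and ergo: "\<And>A. A \<in> sets M \<Longrightarrow> (\<forall>t. T t -` A \<inter> space M = A) \<Longrightarrow> measure M A = 0 \<or> measure M A = 1"
begin

definition rho :: "'a \<Rightarrow> real" where "rho y = occ y D0 0 1"

lemma rho_nonneg: "0 \<le> rho y" unfolding rho_def occ_def by simp

lemma rho_meas[measurable]: "rho \<in> borel_measurable M"
  unfolding rho_def occ_def by measurable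

lemma rho_shift: "rho (T t x) = occ x D0 t (t + 1)"
  unfolding rho_def occ_def by (simp add: occN_shift add.commute)

lemma rho_cont: "continuous_on S (\<lambda>t. rho (T t x))"
  by (intro lip_cont) (simp add: rho_shift occ_lip)

lemma rho_visit:
  assumes "rho (T t x) > 0"
  shows "\<exists>r\<in>{t..t+1}. T r x \<in> D0"
proof (rule ccontr)
  assume "\<not> ?thesis"
  hence "occN x D0 t (t + 1) = 0" unfolding occN_def
    by (subst nn_integral_0_iff_AE) (auto simp: indicator_def)
  thus False using assms by (simp add: rho_shift occ_def)
qed

lemma rho_rat:
  assumes pos: "rho (T t x) > 0" and tb: "t < b"
  shows "\<exists>q::rat. t \<le> real_of_rat q \<and> real_of_rat q < b \<and> rho (T (real_of_rat q) x) > 0"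
proof -
  have c: "continuous_on UNIV (\<lambda>t. rho (T t x))" by (rule rho_cont)
  obtain d where d: "d > 0" "\<And>s. dist s t < d \<Longrightarrow> dist (rho (T s x)) (rho (T t x)) < rho (T t x)"
    using c pos unfolding continuous_on_iff by (metis UNIV_I)
  obtain r where r: "r \<in> \<rat>" "t < r" "r < min b (t + d)" using Rats_dense_in_real[of t "min b (t + d)"] tb d by auto
  then obtain q where q: "r = real_of_rat q" by (auto elim: Rats_cases)
  have "dist r t < d" using r by (auto simp: dist_real_def)
  hence "rho (T r x) > 0" using d(2)[of r] by (auto simp: dist_real_def)
  thus ?thesis using r q by (intro exI[of _ q]) auto
qed

definition Hit :: "'a \<Rightarrow> real \<Rightarrow> real \<Rightarrow> bool" where
  "Hit x a b \<longleftrightarrow> (\<exists>q::rat. a \<le> real_of_rat q \<and> real_of_rat q < b \<and> rho (T (real_of_rat q) x) > 0)"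

definition NoHit :: "'a \<Rightarrow> real \<Rightarrow> bool" where
  "NoHit x a \<longleftrightarrow> (\<forall>q::rat. 0 \<le> real_of_rat q \<and> real_of_rat q < a \<longrightarrow> rho (T (real_of_rat q) x) = 0)"

lemma Hit_iff: "Hit x a b \<longleftrightarrow> (\<exists>t. a \<le> t \<and> t < b \<and> rho (T t x) > 0)"
proof
  assume "Hit x a b" thus "\<exists>t. a \<le> t \<and> t < b \<and> rho (T t x) > 0" unfolding Hit_def by auto
next
  assume "\<exists>t. a \<le> t \<and> t < b \<and> rho (T t x) > 0"
  then obtain t where t: "a \<le> t" "t < b" "rho (T t x) > 0" by auto
  then obtain q :: rat where "t \<le> real_of_rat q" "real_of_rat q < b" "rho (T (real_of_rat q) x) > 0"
    using rho_rat by blast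
  thus "Hit x a b" unfolding Hit_def using t by (intro exI[of _ q]) auto
qed

lemma NoHit_iff: "NoHit x a \<longleftrightarrow> (\<forall>t. 0 \<le> t \<and> t < a \<longrightarrow> rho (T t x) = 0)"
proof
  assume nh: "NoHit x a"
  show "\<forall>t. 0 \<le> t \<and> t < a \<longrightarrow> rho (T t x) = 0"
  proof (intro allI impI, rule ccontr)
    fix t assume t: "0 \<le> t \<and> t < a" "rho (T t x) \<noteq> 0"
    hence "rho (T t x) > 0" using rho_nonneg[of "T t x"] by auto
    then obtain q :: rat where q: "t \<le> real_of_rat q" "real_of_rat q < a" "rho (T (real_of_rat q) x) > 0"
      using rho_rat t by blast
    have "0 \<le> real_of_rat q \<and> real_of_rat q < a" using q t by linarith
    with nh have "rho (T (real_of_rat q) x) = 0" unfolding NoHit_def by blast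
    thus False using q by simp
  qed
next
  assume "\<forall>t. 0 \<le> t \<and> t < a \<longrightarrow> rho (T t x) = 0" thus "NoHit x a" unfolding NoHit_def by auto
qed

definition E :: "real \<Rightarrow> real \<Rightarrow> 'a set" where
  "E a b = {x. NoHit x a \<and> Hit x a b}"

lemma E_sets[measurable]: "E a b \<in> sets M"
proof -
  have "Measurable.pred M (\<lambda>x. NoHit x a \<and> Hit x a b)"
    unfolding NoHit_def Hit_def by measurable
  thus ?thesis unfolding E_def by (simp add: pred_def space_M)
qed

lemma E_shift: "0 \<le> c \<Longrightarrow> x \<in> E (a + c) (b + c) \<Longrightarrow> T c x \<in> E a b"
  unfolding E_def NoHit_iff Hit_iff
proof (safe)
  fix t assume c: "0 \<le> c" and nh: "\<forall>t. 0 \<le> t \<and> t < a + c \<longrightarrow> rho (T t x) = 0" and t: "0 \<le> t" "t < a"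
  have "rho (T (t + c) x) = 0" using nh t c by auto
  thus "rho (T t (T c x)) = 0" by (simp add: Tadd)
next
  fix t assume c: "0 \<le> c" and t: "a + c \<le> t" "t < b + c" "0 < rho (T t x)"
  have "rho (T (t - c) (T c x)) = rho (T t x)" by (simp add: Tadd[symmetric])
  thus "\<exists>t. a \<le> t \<and> t < b \<and> 0 < rho (T t (T c x))" using t by (intro exI[of _ "t - c"]) auto
qed

lemma E_mono_measure: "0 \<le> c \<Longrightarrow> measure M (E (a + c) (b + c)) \<le> measure M (E a b)"
proof -
  assume c: "0 \<le> c"
  have "E (a + c) (b + c) \<subseteq> T c -` E a b" using E_shift[OF c] by auto
  hence "measure M (E (a + c) (b + c)) \<le> measure M (T c -` E a b)"
    using measurable_sets[OF Tmeas[of c] E_sets[of a b]] by (intro finite_measure_mono) (auto simp: space_M)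
  also have "\<dots> = measure M (E a b)" by (rule measure_T) simp
  finally show ?thesis .
qed

lemma E_disj: "0 \<le> a \<Longrightarrow> b \<le> a' \<Longrightarrow> E a b \<inter> E a' b' = {}"
  unfolding E_def NoHit_iff Hit_iff by force

end



lemma sum_blocks:
  fixes K L :: nat and f :: "nat \<Rightarrow> real"
  shows "(\<Sum>k<K. \<Sum>j\<in>{k*L..<(k+1)*L}. f j) = (\<Sum>j<K*L. f j)"
proof (induction K)
  case 0 thus ?case by simp
next
  case (Suc K)
  have "(\<Sum>j<Suc K * L. f j) = (\<Sum>j\<in>{0..<K*L}. f j) + (\<Sum>j\<in>{K*L..<(K+1)*L}. f j)"
    by (subst sum.atLeastLessThan_concat) (auto simp: lessThan_atLeast0)
  thus ?case using Suc by (simp add: lessThan_atLeast0)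
qed

context flD begin

lemma E01_bound: "real L * measure M (E 0 1) \<le> 4"
proof -
  have pw: "(\<integral>\<^sup>+s. indicator {0..real L} s * indicator (E 0 1) (T s x) \<partial>lborel) \<le> 4" for x
  proof (cases "\<exists>s1\<in>{0..real L}. T s1 x \<in> E 0 1")
    case False
    have z: "(\<lambda>s. indicator {0..real L} s * indicator (E 0 1) (T s x)) = (\<lambda>s. 0::ennreal)"
      by (rule ext) (use False in \<open>auto simp: indicator_def\<close>)
    show ?thesis by (simp only: z) simp
  next
    case True
    then obtain s1 where s1: "s1 \<in> {0..real L}" "T s1 x \<in> E 0 1" by auto
    have visit: "\<exists>r\<in>{s..s+2}. T r x \<in> D0" if Ts: "T s x \<in> E 0 1" for s
    proof -
      obtain t where t: "0 \<le> t" "t < 1" "rho (T t (T s x)) > 0" using Ts unfolding E_def Hit_iff by auto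
      hence "rho (T (t + s) x) > 0" by (simp add: Tadd)
      then obtain r where "r \<in> {t+s..t+s+1}" "T r x \<in> D0" using rho_visit by blast
      thus ?thesis using t by (intro bexI[of _ r]) auto
    qed
    obtain r1 where r1: "r1 \<in> {s1..s1+2}" "T r1 x \<in> D0" using visit[OF s1(2)] by auto
    have close: "s \<in> {r1 - 3..r1 + 1}" if s: "s \<in> {0..real L}" "T s x \<in> E 0 1" for s
    proof -
      obtain r2 where r2: "r2 \<in> {s..s+2}" "T r2 x \<in> D0" using visit[OF s(2)] by auto
      have "\<not> (r2 - r1 \<ge> 1)"
      proof
        assume a: "r2 - r1 \<ge> 1"
        have "r2 - r1 \<le> real L + 3" using r2 r1 s s1 by auto
        hence "T (r2 - r1) (T r1 x) \<notin> D0" using noret[OF r1(2) a] by simp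
        moreover have "T (r2 - r1) (T r1 x) = T r2 x" by (simp add: Tadd[symmetric])
        ultimately show False using r2 by simp
      qed
      moreover have "\<not> (r1 - r2 \<ge> 1)"
      proof
        assume a: "r1 - r2 \<ge> 1"
        have "r1 - r2 \<le> real L + 3" using r2 r1 s s1 by auto
        hence "T (r1 - r2) (T r2 x) \<notin> D0" using noret[OF r2(2) a] by simp
        moreover have "T (r1 - r2) (T r2 x) = T r1 x" by (simp add: Tadd[symmetric])
        ultimately show False using r1 by simp
      qed
      ultimately show ?thesis using r2 by auto
    qed
    have "(\<integral>\<^sup>+s. indicator {0..real L} s * indicator (E 0 1) (T s x) \<partial>lborel) \<le> (\<integral>\<^sup>+s. indicator {r1 - 3..r1 + 1} s \<partial>lborel)"
    proof (intro nn_integral_mono)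
      fix s
      show "indicator {0..real L} s * indicator (E 0 1) (T s x) \<le> (indicator {r1 - 3..r1 + 1} s :: ennreal)"
      proof (cases "s \<in> {0..real L} \<and> T s x \<in> E 0 1")
        case True thus ?thesis using close[of s] by (auto simp: indicator_def)
      qed (auto simp: indicator_def)
    qed
    also have "\<dots> = 4" by simp
    finally show ?thesis .
  qed
  have "ennreal (real L) * emeasure M (E 0 1) = (\<integral>\<^sup>+x. \<integral>\<^sup>+s. indicator {0..real L} s * indicator (E 0 1) (T s x) \<partial>lborel \<partial>M)"
    using fub[of "indicator (E 0 1)" 0 "real L"] by simp
  also have "\<dots> \<le> (\<integral>\<^sup>+x. 4 \<partial>M)" by (intro nn_integral_mono pw)
  also have "\<dots> = 4" by (simp add: emeasure_space_1)
  finally have "ennreal (real L) * emeasure M (E 0 1) \<le> 4" .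
  hence "ennreal (real L * measure M (E 0 1)) \<le> ennreal 4"
    by (simp add: emeasure_eq_measure ennreal_mult)
  thus ?thesis by (subst (asm) ennreal_le_iff) auto
qed

definition Dp :: "'a set" where "Dp = (\<Union>k::nat. E (real (k * L)) (real (k * L) + 1))"

lemma Dp_sets[measurable]: "Dp \<in> sets M" unfolding Dp_def by measurable

lemma Dp_bound: "real L * measure M Dp \<le> 5"
proof -
  define A where "A k = E (real (k * L)) (real (k * L) + 1)" for k
  have disj: "disjoint_family A"
    unfolding disjoint_family_on_def
  proof (intro ballI impI)
    fix m n :: nat assume "m \<noteq> n"
    show "A m \<inter> A n = {}"
    proof (cases "m < n")
      case True
      hence "real (m * L) + 1 \<le> real (n * L)"
      proof -
        have "(m + 1) * L \<le> n * L" using True by (intro mult_right_mono) auto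
        moreover have "m * L + 1 \<le> (m + 1) * L" using Lpos by simp
        ultimately show ?thesis by linarith
      qed
      thus ?thesis unfolding A_def by (intro E_disj) auto
    next
      case False
      hence "n < m" using \<open>m \<noteq> n\<close> by simp
      hence "real (n * L) + 1 \<le> real (m * L)"
      proof -
        have "(n + 1) * L \<le> m * L" using \<open>n < m\<close> by (intro mult_right_mono) auto
        moreover have "n * L + 1 \<le> (n + 1) * L" using Lpos by simp
        ultimately show ?thesis by linarith
      qed
      hence "A n \<inter> A m = {}" unfolding A_def by (intro E_disj) auto
      thus ?thesis by auto
    qed
  qed
  have DpA: "Dp = (\<Union>k. A k)" unfolding Dp_def A_def by simp
  have sums: "(\<lambda>k. measure M (A k)) sums measure M Dp"
    unfolding DpA
  proof (rule measure_UNION)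
    show "range A \<subseteq> sets M" by (auto simp: A_def)
    show "disjoint_family A" by (rule disj)
  qed simp
  have part: "(\<Sum>k<K. measure M (A (Suc k))) * real L \<le> 1" for K
  proof -
    have "(\<Sum>k<K. measure M (A (Suc k))) * real L = (\<Sum>k<K. \<Sum>j\<in>{k*L..<(k+1)*L}. measure M (A (Suc k)))"
      by (subst sum_distrib_right) (simp add: mult.commute)
    also have "\<dots> \<le> (\<Sum>k<K. \<Sum>j\<in>{k*L..<(k+1)*L}. measure M (E (real j) (real j + 1)))"
    proof (intro sum_mono)
      fix k j assume j: "j \<in> {k*L..<(k+1)*L}"
      define c where "c = real ((Suc k) * L) - real j"
      have jle: "j \<le> Suc k * L" using j by auto
      have "real j \<le> real (Suc k * L)" using jle by (simp only: of_nat_le_iff)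
      hence c0: "0 \<le> c" unfolding c_def by linarith
      have "A (Suc k) = E (real j + c) (real j + 1 + c)" unfolding A_def c_def by (simp add: algebra_simps)
      thus "measure M (A (Suc k)) \<le> measure M (E (real j) (real j + 1))" using E_mono_measure[OF c0] by simp
    qed
    also have "\<dots> = (\<Sum>j<K*L. measure M (E (real j) (real j + 1)))" by (rule sum_blocks)
    also have "\<dots> = measure M (\<Union>j<K*L. E (real j) (real j + 1))"
    proof (rule measure_finite_Union[symmetric])
      show "disjoint_family_on (\<lambda>j. E (real j) (real j + 1)) {..<K*L}"
        unfolding disjoint_family_on_def
      proof (intro ballI impI)
        fix m n :: nat assume "m \<noteq> n"
        show "E (real m) (real m + 1) \<inter> E (real n) (real n + 1) = {}"
        proof (cases "m < n")
          case True thus ?thesis by (intro E_disj) auto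
        next
          case False hence "n < m" using \<open>m \<noteq> n\<close> by simp
          thus ?thesis using E_disj[of "real n" "real n + 1" "real m"] by auto
        qed
      qed
    qed auto
    also have "\<dots> \<le> 1" by simp
    finally show ?thesis .
  qed
  have A0: "A 0 = E 0 1" unfolding A_def by simp
  have "real L * measure M Dp \<le> 5"
  proof (rule LIMSEQ_le_const2)
    show "(\<lambda>n. real L * (\<Sum>k<n. measure M (A k))) \<longlonglongrightarrow> real L * measure M Dp"
      using sums unfolding sums_def by (intro tendsto_mult_left)
    show "\<exists>N. \<forall>n\<ge>N. real L * (\<Sum>k<n. measure M (A k)) \<le> 5"
    proof (intro exI allI impI)
      fix n :: nat assume "n \<ge> 1"
      then obtain K where K: "n = Suc K" by (cases n) auto
      have "real L * (\<Sum>k<n. measure M (A k)) = real L * measure M (A 0) + (\<Sum>k<K. measure M (A (Suc k))) * real L"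
        unfolding K by (subst sum.lessThan_Suc_shift) (simp add: algebra_simps)
      also have "\<dots> \<le> 4 + 1" using part[of K] E01_bound A0 by (intro add_mono) auto
      finally show "real L * (\<Sum>k<n. measure M (A k)) \<le> 5" by simp
    qed
  qed
  thus ?thesis .
qed

end



context flD begin

definition Nv :: "'a set" where "Nv = {x. \<forall>n::nat. NoHit x (real n)}"

lemma Nv_iff: "x \<in> Nv \<longleftrightarrow> (\<forall>t\<ge>0. rho (T t x) = 0)"
proof
  assume "x \<in> Nv"
  hence nh: "\<And>n::nat. NoHit x (real n)" unfolding Nv_def by auto
  show "\<forall>t\<ge>0. rho (T t x) = 0"
  proof (intro allI impI)
    fix t :: real assume t: "0 \<le> t"
    obtain n :: nat where "t < real n" using reals_Archimedean2 by auto
    thus "rho (T t x) = 0" using nh[of n] t unfolding NoHit_iff by auto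
  qed
next
  assume "\<forall>t\<ge>0. rho (T t x) = 0"
  thus "x \<in> Nv" unfolding Nv_def NoHit_iff by auto
qed

lemma Nv_sets[measurable]: "Nv \<in> sets M"
proof -
  have "Measurable.pred M (\<lambda>x. \<forall>n::nat. NoHit x (real n))" unfolding NoHit_def by measurable
  thus ?thesis unfolding Nv_def by (simp add: pred_def space_M)
qed

lemma Nv_fwd: "x \<in> Nv \<Longrightarrow> 0 \<le> c \<Longrightarrow> T c x \<in> Nv"
  unfolding Nv_iff by (auto simp: Tadd[symmetric])

lemma rho_pos_sets[measurable]: "{x. rho x > 0} \<in> sets M"
proof -
  have "{x \<in> space M. rho x > 0} \<in> sets M" by measurable
  thus ?thesis by (simp add: space_M)
qed

lemma rho_pos_set: "emeasure M {x. rho x > 0} > 0"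
proof (rule ccontr)
  assume "\<not> ?thesis"
  hence z: "emeasure M {x. rho x > 0} = 0" by (simp add: not_gr_zero)
  have "{x. rho x > 0} \<in> null_sets M" using z by (auto simp: null_sets_def)
  hence "AE x in M. x \<notin> {x. rho x > 0}" by (rule AE_not_in)
  hence "AE x in M. occN x D0 0 1 = 0"
  proof eventually_elim
    case (elim x)
    hence "rho x = 0" using rho_nonneg[of x] by auto
    hence "enn2real (occN x D0 0 1) = 0" unfolding rho_def occ_def .
    thus ?case using occN_fin[of x D0 0 1] by (auto simp: enn2real_eq_0_iff)
  qed
  hence "(\<integral>\<^sup>+x. occN x D0 0 1 \<partial>M) = 0" by (simp add: nn_integral_0_iff_AE)
  moreover have "(\<integral>\<^sup>+x. occN x D0 0 1 \<partial>M) = emeasure M D0"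
    unfolding occN_def using fub[of "indicator D0" 0 1] by simp
  ultimately show False using D0pos by simp
qed

lemma Nv_null: "measure M Nv = 0"
proof -
  define Z where "Z = (\<Union>n::nat. T (real n) -` Nv)"
  have Zs: "Z \<in> sets M" unfolding Z_def
    using measurable_sets[OF Tmeas Nv_sets] by (intro sets.countable_UN) (auto simp: space_M)
  have Zinv: "T t -` Z \<inter> space M = Z" for t
  proof -
    have "T t x \<in> Z \<longleftrightarrow> x \<in> Z" for x
    proof
      assume "T t x \<in> Z"
      then obtain n :: nat where n: "T (real n) (T t x) \<in> Nv" unfolding Z_def by auto
      hence n': "T (real n + t) x \<in> Nv" by (simp add: Tadd)
      obtain m :: nat where m: "real n + t \<le> real m" using real_arch_simple by auto
      have "T (real m - (real n + t)) (T (real n + t) x) \<in> Nv" using Nv_fwd[OF n'] m by auto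
      hence "T (real m) x \<in> Nv" by (simp add: Tadd[symmetric])
      thus "x \<in> Z" unfolding Z_def by auto
    next
      assume "x \<in> Z"
      then obtain n :: nat where n: "T (real n) x \<in> Nv" unfolding Z_def by auto
      obtain m :: nat where m: "real n - t \<le> real m" using real_arch_simple by auto
      have "T (real m + t - real n) (T (real n) x) \<in> Nv" using Nv_fwd[OF n] m by auto
      hence "T (real m) (T t x) \<in> Nv" by (simp add: Tadd[symmetric])
      thus "T t x \<in> Z" unfolding Z_def by auto
    qed
    thus ?thesis by (auto simp: space_M)
  qed
  have incs: "incseq (\<lambda>n::nat. T (real n) -` Nv)"
  proof (intro monoI subsetI)
    fix n m :: nat and x assume nm: "n \<le> m" and x: "x \<in> T (real n) -` Nv"
    have "T (real m - real n) (T (real n) x) \<in> Nv" using Nv_fwd[of "T (real n) x"] x nm by auto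
    thus "x \<in> T (real m) -` Nv" by (simp add: Tadd[symmetric])
  qed
  have "emeasure M Z = (SUP n::nat. emeasure M (T (real n) -` Nv))"
    unfolding Z_def
    by (rule SUP_emeasure_incseq[symmetric]) (use incs measurable_sets[OF Tmeas Nv_sets] in \<open>auto simp: space_M\<close>)
  also have "\<dots> = emeasure M Nv" by (simp add: emeasure_T)
  finally have ZN: "measure M Z = measure M Nv" by (simp add: measure_def)
  have "measure M Nv < 1"
  proof -
    have Ps: "{x. rho x > 0} \<in> sets M" by (rule rho_pos_sets)
    have disj: "Nv \<inter> {x. rho x > 0} = {}"
    proof (intro equals0I)
      fix x assume x: "x \<in> Nv \<inter> {x. rho x > 0}"
      hence "rho (T 0 x) = 0" using Nv_iff by blast
      thus False using x T0 by simp
    qed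
    have "measure M Nv + measure M {x. rho x > 0} = measure M (Nv \<union> {x. rho x > 0})"
      using disj Ps by (intro finite_measure_Union[symmetric]) auto
    also have "\<dots> \<le> 1" by simp
    finally have "measure M Nv + measure M {x. rho x > 0} \<le> 1" .
    moreover have "measure M {x. rho x > 0} > 0" using rho_pos_set by (simp add: emeasure_eq_measure)
    ultimately show ?thesis by linarith
  qed
  moreover have "measure M Z = 0 \<or> measure M Z = 1" by (rule ergo[OF Zs]) (use Zinv in auto)
  ultimately show ?thesis using ZN by auto
qed

lemma window:
  assumes xN: "x \<notin> Nv" and xE: "x \<notin> E 0 1"
  shows "\<exists>t. 0 \<le> t \<and> t < real L \<and> (\<forall>s. t < s \<and> s \<le> t + 1 \<longrightarrow> T s x \<in> Dp)"
proof -
  define S where "S = {t. 0 \<le> t \<and> rho (T t x) > 0}"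
  have Sne: "S \<noteq> {}"
  proof -
    obtain t where "0 \<le> t" "rho (T t x) \<noteq> 0" using xN unfolding Nv_iff by auto
    thus ?thesis unfolding S_def using rho_nonneg[of "T t x"] by auto
  qed
  have Sbdd: "bdd_below S" unfolding S_def by (auto intro: bdd_belowI[of _ 0])
  define e where "e = Inf S"
  have e_le: "\<And>t. t \<in> S \<Longrightarrow> e \<le> t" unfolding e_def using Sbdd by (auto intro: cInf_lower)
  have e_app: "\<And>y. e < y \<Longrightarrow> \<exists>t\<in>S. t < y" unfolding e_def using Sne Sbdd by (simp add: cInf_less_iff)
  have nohit01: "\<And>t. 0 \<le> t \<Longrightarrow> t < 1 \<Longrightarrow> \<not> rho (T t x) > 0"
    using xE unfolding E_def NoHit_iff Hit_iff by auto
  have e1: "1 \<le> e" unfolding e_def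
  proof (rule cInf_greatest[OF Sne])
    fix t assume "t \<in> S" thus "1 \<le> t" using nohit01 unfolding S_def by force
  qed
  define k where "k = nat \<lfloor>(e - 1) / real L\<rfloor>"
  have Lp: "real L > 0" using Lpos by simp
  have k1: "real k * real L \<le> e - 1"
  proof -
    have "real k = of_int \<lfloor>(e - 1) / real L\<rfloor>" unfolding k_def using e1 Lp by (simp add: divide_nonneg_pos)
    also have "\<dots> \<le> (e - 1) / real L" by simp
    finally show ?thesis using Lp by (simp add: field_simps)
  qed
  have k2: "e - 1 < (real k + 1) * real L"
  proof -
    have "(e - 1) / real L < of_int \<lfloor>(e - 1) / real L\<rfloor> + 1" by linarith
    also have "of_int \<lfloor>(e - 1) / real L\<rfloor> = real k" unfolding k_def using e1 Lp by (simp add: divide_nonneg_pos)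
    finally show ?thesis using Lp by (simp add: field_simps)
  qed
  define t0 where "t0 = e - 1 - real k * real L"
  have t0: "0 \<le> t0" "t0 < real L" using k1 k2 unfolding t0_def by (auto simp: algebra_simps)
  have "\<forall>s. t0 < s \<and> s \<le> t0 + 1 \<longrightarrow> T s x \<in> Dp"
  proof (intro allI impI)
    fix s assume s: "t0 < s \<and> s \<le> t0 + 1"
    have "T s x \<in> E (real (k * L)) (real (k * L) + 1)"
      unfolding E_def NoHit_iff Hit_iff
    proof (intro CollectI conjI allI impI)
      fix \<tau> assume \<tau>: "0 \<le> \<tau> \<and> \<tau> < real (k * L)"
      have "\<tau> + s < e" using \<tau> s unfolding t0_def by auto
      hence "\<tau> + s \<notin> S" using e_le by force
      moreover have "0 \<le> \<tau> + s" using \<tau> s t0 by auto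
      ultimately have "\<not> rho (T (\<tau> + s) x) > 0" unfolding S_def by auto
      thus "rho (T \<tau> (T s x)) = 0" using rho_nonneg[of "T (\<tau> + s) x"] by (simp add: Tadd)
    next
      have "e < real (k * L) + 1 + s" using s unfolding t0_def by auto
      then obtain v where v: "v \<in> S" "v < real (k * L) + 1 + s" using e_app by blast
      have "e \<le> v" using e_le[OF v(1)] .
      have "rho (T (v - s) (T s x)) > 0" using v(1) unfolding S_def by (simp add: Tadd[symmetric])
      moreover have "real (k * L) \<le> v - s" using \<open>e \<le> v\<close> s unfolding t0_def by auto
      moreover have "v - s < real (k * L) + 1" using v(2) by auto
      ultimately show "\<exists>t. real (k * L) \<le> t \<and> t < real (k * L) + 1 \<and> 0 < rho (T t (T s x))" by blast
    qed
    thus "T s x \<in> Dp" unfolding Dp_def by blast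
  qed
  thus ?thesis using t0 by blast
qed

end

context fl begin

lemma visit_lemma:
  assumes ap: "AE x in M. \<forall>t>0. T t x \<noteq> x"
    and ergo: "\<And>A. A \<in> sets M \<Longrightarrow> (\<forall>t. T t -` A \<inter> space M = A) \<Longrightarrow> measure M A = 0 \<or> measure M A = 1"
    and L: "(L::nat) \<ge> 1"
  shows "\<exists>Dp Bd. Dp \<in> sets M \<and> Bd \<in> sets M \<and> real L * measure M Dp \<le> 5 \<and> real L * measure M Bd \<le> 4 \<and>
     (\<forall>x. x \<notin> Bd \<longrightarrow> (\<exists>t. 0 \<le> t \<and> t < real L \<and> (\<forall>s. t < s \<and> s \<le> t + 1 \<longrightarrow> T s x \<in> Dp)))"
proof -
  obtain D0 where D0: "D0 \<in> sets M" "emeasure M D0 > 0" "\<forall>y\<in>D0. \<forall>s\<in>{1..real L + 3}. T s y \<notin> D0"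
    using no_return[OF ap, of "real L + 3"] by auto
  interpret flD M T D0 L
    by unfold_locales (use D0 L ergo in auto)
  have Bds: "E 0 1 \<union> Nv \<in> sets M" by measurable
  have "measure M (E 0 1 \<union> Nv) \<le> measure M (E 0 1) + measure M Nv"
    by (rule measure_Un_le) auto
  hence "real L * measure M (E 0 1 \<union> Nv) \<le> real L * measure M (E 0 1)"
    using Nv_null by (intro mult_left_mono) auto
  hence Bd: "real L * measure M (E 0 1 \<union> Nv) \<le> 4" using E01_bound by linarith
  show ?thesis
    by (intro exI[of _ Dp] exI[of _ "E 0 1 \<union> Nv"] conjI Dp_sets Bds Dp_bound Bd allI impI window) auto
qed

end


context fl begin

lemma avg_identity:
  fixes hN :: "'a \<Rightarrow> ennreal"
  assumes hNm[measurable]: "hN \<in> borel_measurable M"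
    and fin: "\<And>n::nat. (\<integral>\<^sup>+s. indicator {0..real n} s * hN (T s x) \<partial>lborel) \<noteq> \<infinity>"
    and t: "1 \<le> t"
  shows "t * birkhoff_avg T (\<lambda>y. enn2real (hN y) - enn2real (hN (T 1 y))) t x
     = enn2real (\<integral>\<^sup>+s. indicator {0<..1} s * hN (T s x) \<partial>lborel)
       - enn2real (\<integral>\<^sup>+s. indicator {t..<t+1} s * hN (T s x) \<partial>lborel)"
proof -
  define \<phi> where "\<phi> s = enn2real (hN (T s x))" for s
  have hT[measurable]: "(\<lambda>s. hN (T s x)) \<in> borel_measurable lborel"
    by (rule measurable_compose[OF Torb_meas hNm])
  have \<phi>m[measurable]: "\<phi> \<in> borel_measurable lborel" unfolding \<phi>_def by measurable
  have \<phi>nn: "0 \<le> \<phi> s" for s unfolding \<phi>_def by simp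
  define n :: nat where "n = nat \<lceil>t\<rceil> + 2"
  have tn: "t + 1 \<le> real n" unfolding n_def by linarith
  have AEfin: "AE s in lborel. indicator {0..real n} s * hN (T s x) \<noteq> \<infinity>"
    by (rule nn_integral_PInf_AE) (use fin[of n] in auto)
  have key: "integrable lborel (\<lambda>s. indicator A s * \<phi> s) \<and>
      (\<integral>s. indicator A s * \<phi> s \<partial>lborel) = enn2real (\<integral>\<^sup>+s. indicator A s * hN (T s x) \<partial>lborel)"
    if A[measurable]: "A \<in> sets borel" and An: "A \<subseteq> {0..real n}" for A
  proof -
    have eq: "(\<integral>\<^sup>+s. ennreal (indicator A s * \<phi> s) \<partial>lborel) = (\<integral>\<^sup>+s. indicator A s * hN (T s x) \<partial>lborel)"
    proof (rule nn_integral_cong_AE)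
      show "AE s in lborel. ennreal (indicator A s * \<phi> s) = indicator A s * hN (T s x)"
        using AEfin
      proof eventually_elim
        case (elim s)
        show ?case
        proof (cases "s \<in> A")
          case True
          hence "hN (T s x) \<noteq> \<infinity>" using elim An by (auto simp: indicator_def)
          thus ?thesis using True unfolding \<phi>_def by (simp add: ennreal_enn2real_if)
        qed simp
      qed
    qed
    have le: "(\<integral>\<^sup>+s. indicator A s * hN (T s x) \<partial>lborel) \<le> (\<integral>\<^sup>+s. indicator {0..real n} s * hN (T s x) \<partial>lborel)"
      using An by (intro nn_integral_mono) (auto simp: indicator_def)
    have lt: "(\<integral>\<^sup>+s. ennreal (indicator A s * \<phi> s) \<partial>lborel) < \<infinity>"
      using le fin[of n] eq by (simp add: less_top[symmetric] top_unique) (metis le top.extremum_uniqueI)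
    have "integrable lborel (\<lambda>s. indicator A s * \<phi> s)"
      by (rule integrableI_nonneg) (use lt \<phi>nn in \<open>auto simp: indicator_def\<close>)
    moreover have "(\<integral>s. indicator A s * \<phi> s \<partial>lborel) = enn2real (\<integral>\<^sup>+s. indicator A s * hN (T s x) \<partial>lborel)"
      by (subst integral_eq_nn_integral) (use \<phi>nn eq in \<open>auto simp: indicator_def\<close>)
    ultimately show ?thesis by simp
  qed
  have s1: "{0<..<t} \<subseteq> {0..real n}" using tn by (auto simp: subset_eq)
  have s2: "{1<..<t+1} \<subseteq> {0..real n}" using tn by (auto simp: subset_eq)
  have s3: "{0<..1} \<subseteq> {0..real n}" using tn t by (auto simp: subset_eq)
  have s4: "{t..<t+1} \<subseteq> {0..real n}" using tn t by (auto simp: subset_eq)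
  note k1 = key[OF _ s1] and k2 = key[OF _ s2] and k3 = key[OF _ s3] and k4 = key[OF _ s4]
  have i1: "integrable lborel (\<lambda>s. indicator {0<..<t} s * \<phi> s)" using k1 by auto
  have i2: "integrable lborel (\<lambda>s. indicator {1<..<t+1} s * \<phi> s)" using k2 by auto
  have i3: "integrable lborel (\<lambda>s. indicator {0<..1} s * \<phi> s)" using k3 by auto
  have i4: "integrable lborel (\<lambda>s. indicator {t..<t+1} s * \<phi> s)" using k4 by auto
  have shift: "(\<lambda>s. indicator {0<..<t} s * \<phi> (1 + s)) = (\<lambda>s. (\<lambda>r. indicator {1<..<t+1} r * \<phi> r) (1 + 1 * s))"
    by (auto simp: indicator_def)
  have i5: "integrable lborel (\<lambda>s. indicator {0<..<t} s * \<phi> (1 + s))"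
    unfolding shift by (rule lborel_integrable_real_affine[OF i2]) simp
  have int5: "(\<integral>s. indicator {0<..<t} s * \<phi> (1 + s) \<partial>lborel) = (\<integral>s. indicator {1<..<t+1} s * \<phi> s \<partial>lborel)"
    unfolding shift using lborel_integral_real_affine[of 1 "\<lambda>r. indicator {1<..<t+1} r * \<phi> r" 1] by simp
  have "t * birkhoff_avg T (\<lambda>y. enn2real (hN y) - enn2real (hN (T 1 y))) t x
      = (LBINT s=0..t. (\<phi> s - \<phi> (1 + s)))"
    unfolding birkhoff_avg_def \<phi>_def using t by (simp add: Tadd)
  also have "\<dots> = (\<integral>s. indicator {0<..<t} s * (\<phi> s - \<phi> (1 + s)) \<partial>lborel)"
    using t by (simp add: interval_lebesgue_integral_def set_lebesgue_integral_def zero_ereal_def)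
  also have "\<dots> = (\<integral>s. indicator {0<..<t} s * \<phi> s - indicator {0<..<t} s * \<phi> (1 + s) \<partial>lborel)"
    by (simp add: algebra_simps)
  also have "\<dots> = (\<integral>s. indicator {0<..<t} s * \<phi> s \<partial>lborel) - (\<integral>s. indicator {1<..<t+1} s * \<phi> s \<partial>lborel)"
    using Bochner_Integration.integral_diff[OF i1 i5] int5 by simp
  also have "\<dots> = (\<integral>s. indicator {0<..<t} s * \<phi> s - indicator {1<..<t+1} s * \<phi> s \<partial>lborel)"
    using Bochner_Integration.integral_diff[OF i1 i2] by simp
  also have "\<dots> = (\<integral>s. indicator {0<..1} s * \<phi> s - indicator {t..<t+1} s * \<phi> s \<partial>lborel)"
    by (intro Bochner_Integration.integral_cong refl) (use t in \<open>auto simp: indicator_def\<close>)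
  also have "\<dots> = (\<integral>s. indicator {0<..1} s * \<phi> s \<partial>lborel) - (\<integral>s. indicator {t..<t+1} s * \<phi> s \<partial>lborel)"
    using Bochner_Integration.integral_diff[OF i3 i4] by simp
  also have "\<dots> = enn2real (\<integral>\<^sup>+s. indicator {0<..1} s * hN (T s x) \<partial>lborel)
       - enn2real (\<integral>\<^sup>+s. indicator {t..<t+1} s * hN (T s x) \<partial>lborel)"
    using k3 k4 by auto
  finally show ?thesis .
qed

end



lemma limsup_infI:
  fixes g :: "real \<Rightarrow> ereal"
  assumes "\<And>C N. \<exists>\<tau>\<ge>N. ereal C \<le> g \<tau>"
  shows "Limsup at_top g = \<infinity>"
  unfolding Limsup_def
proof (rule INF_eqI)
  fix P :: "real \<Rightarrow> bool" assume "P \<in> {P. eventually P at_top}"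
  hence "eventually P at_top" by simp
  hence "\<exists>N. \<forall>\<tau>>N. P \<tau>" by (simp add: eventually_at_top_dense)
  then obtain N where N0: "\<And>\<tau>. \<tau> > N \<Longrightarrow> P \<tau>" by blast
  have N: "\<And>\<tau>. \<tau> \<ge> N + 1 \<Longrightarrow> P \<tau>" using N0 by auto
  have "(SUP x\<in>{x. P x}. g x) = \<infinity>"
  proof (rule SUP_PInfty)
    fix n :: nat
    obtain \<tau> where "\<tau> \<ge> N + 1" "ereal (real n) \<le> g \<tau>" using assms by blast
    thus "\<exists>i\<in>{x. P x}. ereal (real n) \<le> g i" using N by auto
  qed
  thus "\<infinity> \<le> (SUP x\<in>{x. P x}. g x)" by simp
qed auto

lemma ennreal_term_le_suminf: "(f j :: ennreal) \<le> (\<Sum>n. f n)"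
proof -
  have "sum f {j} \<le> suminf f" by (rule sum_le_suminf[OF summableI]) auto
  thus ?thesis by simp
qed

context fl begin

lemma main:
  assumes ap: "AE x in M. \<forall>t>0. T t x \<noteq> x"
    and ergo: "\<And>A. A \<in> sets M \<Longrightarrow> (\<forall>t. T t -` A \<inter> space M = A) \<Longrightarrow> measure M A = 0 \<or> measure M A = 1"
    and \<phi>pos: "\<forall>t>0. \<phi> t > 0" and \<phi>lim: "(\<phi> \<longlongrightarrow> 0) at_top"
  shows "\<exists>f. integrable M f \<and> integral\<^sup>L M f = 0 \<and>
           (AE x in M. Limsup at_top (\<lambda>t. ereal (\<bar>birkhoff_avg T f t x\<bar> / \<phi> t)) = \<infinity>)"
proof -
  have "\<forall>j::nat. \<exists>N. real j + 1 \<le> N \<and> (\<forall>\<tau>\<ge>N. \<phi> \<tau> \<le> 1 / 4^j)"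
  proof
    fix j :: nat
    have "eventually (\<lambda>\<tau>. \<phi> \<tau> < 1 / 4^j) at_top"
      by (rule order_tendstoD(2)[OF \<phi>lim]) simp
    then obtain N0 where N0: "\<And>\<tau>. \<tau> \<ge> N0 \<Longrightarrow> \<phi> \<tau> < 1 / 4^j" by (auto simp: eventually_at_top_linorder)
    show "\<exists>N. real j + 1 \<le> N \<and> (\<forall>\<tau>\<ge>N. \<phi> \<tau> \<le> 1 / 4^j)"
      by (intro exI[of _ "max N0 (real j + 1)"]) (auto intro: less_imp_le N0)
  qed
  then obtain Nf where Nf: "\<And>j. real j + 1 \<le> Nf j" "\<And>j \<tau>. \<tau> \<ge> Nf j \<Longrightarrow> \<phi> \<tau> \<le> 1 / 4^j" by metis
  define Lf where "Lf j = nat \<lceil>Nf j\<rceil> + 4^j" for j :: nat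
  have Lf1: "Lf j \<ge> 1" for j unfolding Lf_def by (simp add: Suc_leI)
  have LfN: "Nf j \<le> real (Lf j)" for j unfolding Lf_def by linarith
  have Lf4: "(4::real)^j \<le> real (Lf j)" for j unfolding Lf_def by simp
  have "\<forall>j. \<exists>DB. fst DB \<in> sets M \<and> snd DB \<in> sets M \<and> real (Lf j) * measure M (fst DB) \<le> 5 \<and> real (Lf j) * measure M (snd DB) \<le> 4 \<and>
     (\<forall>x. x \<notin> snd DB \<longrightarrow> (\<exists>t. 0 \<le> t \<and> t < real (Lf j) \<and> (\<forall>s. t < s \<and> s \<le> t + 1 \<longrightarrow> T s x \<in> fst DB)))"
  proof
    fix j
    from visit_lemma[OF ap ergo Lf1[of j]] obtain Dp Bd where
      "Dp \<in> sets M \<and> Bd \<in> sets M \<and> real (Lf j) * measure M Dp \<le> 5 \<and> real (Lf j) * measure M Bd \<le> 4 \<and>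
     (\<forall>x. x \<notin> Bd \<longrightarrow> (\<exists>t. 0 \<le> t \<and> t < real (Lf j) \<and> (\<forall>s. t < s \<and> s \<le> t + 1 \<longrightarrow> T s x \<in> Dp)))"
      by blast
    thus "\<exists>DB. fst DB \<in> sets M \<and> snd DB \<in> sets M \<and> real (Lf j) * measure M (fst DB) \<le> 5 \<and> real (Lf j) * measure M (snd DB) \<le> 4 \<and>
     (\<forall>x. x \<notin> snd DB \<longrightarrow> (\<exists>t. 0 \<le> t \<and> t < real (Lf j) \<and> (\<forall>s. t < s \<and> s \<le> t + 1 \<longrightarrow> T s x \<in> fst DB)))"
      by (intro exI[of _ "(Dp, Bd)"]) simp
  qed
  then obtain DB where DB: "\<And>j. fst (DB j) \<in> sets M" "\<And>j. snd (DB j) \<in> sets M"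
    "\<And>j. real (Lf j) * measure M (fst (DB j)) \<le> 5" "\<And>j. real (Lf j) * measure M (snd (DB j)) \<le> 4"
    "\<And>j x. x \<notin> snd (DB j) \<Longrightarrow> \<exists>t. 0 \<le> t \<and> t < real (Lf j) \<and> (\<forall>s. t < s \<and> s \<le> t + 1 \<longrightarrow> T s x \<in> fst (DB j))"
    by metis
  define Dpf where "Dpf j = fst (DB j)" for j
  define Bdf where "Bdf j = snd (DB j)" for j
  note Dps[measurable] = DB(1)[folded Dpf_def] and Bds[measurable] = DB(2)[folded Bdf_def]
  note Dpb = DB(3)[folded Dpf_def] and Bdb = DB(4)[folded Bdf_def]
  note win = DB(5)[folded Dpf_def Bdf_def]
  define lam where "lam j = real j * ((Nf j + real (Lf j)) / 4^j + 1)" for j :: nat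
  have lam_nn: "0 \<le> lam j" for j unfolding lam_def using Nf(1)[of j] by (auto intro!: mult_nonneg_nonneg add_nonneg_nonneg)
  define hN where "hN x = (\<Sum>j. ennreal (lam j) * indicator (Dpf j) x)" for x
  have hNm[measurable]: "hN \<in> borel_measurable M" unfolding hN_def by measurable
  have term_bound: "lam j * measure M (Dpf j) \<le> 15 / 2^j" for j
  proof -
    have Lp: "real (Lf j) > 0" using Lf1[of j] by simp
    have "lam j * measure M (Dpf j) \<le> lam j * (5 / real (Lf j))"
      using Dpb[of j] Lp lam_nn[of j] by (intro mult_left_mono) (auto simp: field_simps)
    also have "\<dots> = 5 * real j * ((Nf j + real (Lf j)) / 4^j / real (Lf j) + 1 / real (Lf j))"
      unfolding lam_def using Lp by (simp add: field_simps)
    also have "\<dots> \<le> 5 * real j * (2 / 4^j + 1 / 4^j)"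
    proof (intro mult_left_mono add_mono)
      show "(Nf j + real (Lf j)) / 4^j / real (Lf j) \<le> 2 / 4^j"
        using LfN[of j] Lp by (simp add: field_simps)
      show "1 / real (Lf j) \<le> 1 / 4^j" using Lf4[of j] Lp by (intro divide_left_mono) (auto intro: mult_pos_pos)
    qed auto
    also have "\<dots> = 15 * (real j / 4^j)" by (simp add: field_simps)
    also have "\<dots> \<le> 15 * (1 / 2^j)"
    proof -
      have "real j \<le> 2^j" using less_exp[of j] by (simp add: less_imp_le)
      hence "real j / 4^j \<le> 2^j / 4^j" by (intro divide_right_mono) auto
      also have "(2::real)^j / 4^j = 1 / 2^j" by (simp add: power_divide[symmetric] field_simps power_mult_distrib[symmetric])
      finally show ?thesis by simp
    qed
    finally show ?thesis by simp
  qed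
  have int_hN: "(\<integral>\<^sup>+x. hN x \<partial>M) \<noteq> \<infinity>"
  proof -
    have "(\<integral>\<^sup>+x. hN x \<partial>M) = (\<Sum>j. \<integral>\<^sup>+x. ennreal (lam j) * indicator (Dpf j) x \<partial>M)"
      unfolding hN_def by (rule nn_integral_suminf) measurable
    also have "\<dots> = (\<Sum>j. ennreal (lam j * measure M (Dpf j)))"
      by (simp add: nn_integral_cmult_indicator emeasure_eq_measure ennreal_mult lam_nn)
    also have "\<dots> \<le> (\<Sum>j. ennreal (15 / 2^j))"
      by (intro suminf_le) (auto intro: ennreal_leI term_bound)
    also have "\<dots> = ennreal (\<Sum>j. 15 / 2^j)"
    proof (rule suminf_ennreal2)
      have "(\<lambda>j::nat. 15 / 2^j :: real) = (\<lambda>j. 15 * (1/2)^j)" by (simp add: power_one_over)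
      thus "summable (\<lambda>j::nat. 15 / 2^j :: real)" by (simp add: summable_mult summable_geometric)
    qed auto
    finally show ?thesis by (auto simp: top_unique)
  qed
  define h where "h x = enn2real (hN x)" for x
  have hm[measurable]: "h \<in> borel_measurable M" unfolding h_def by measurable
  have ih: "integrable M h"
  proof (rule integrableI_nonneg)
    show "AE x in M. 0 \<le> h x" by (simp add: h_def)
    have "(\<integral>\<^sup>+x. ennreal (h x) \<partial>M) \<le> (\<integral>\<^sup>+x. hN x \<partial>M)"
      unfolding h_def by (intro nn_integral_mono) (simp add: ennreal_enn2real_if)
    thus "(\<integral>\<^sup>+x. ennreal (h x) \<partial>M) < \<infinity>" using int_hN by (simp add: less_top[symmetric] top_unique)
      (metis int_hN neq_top_trans)
  qed auto
  define f where "f x = h x - h (T 1 x)" for x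
  have if_: "integrable M f" unfolding f_def by (intro Bochner_Integration.integrable_diff ih integrable_T)
  have intf: "integral\<^sup>L M f = 0"
    unfolding f_def using Bochner_Integration.integral_diff[OF ih integrable_T[OF ih, of 1]] integral_T[OF hm, of 1] by simp
  have AEfin: "AE x in M. \<forall>n::nat. (\<integral>\<^sup>+s. indicator {0..real n} s * hN (T s x) \<partial>lborel) \<noteq> \<infinity>"
  proof (subst AE_all_countable, intro allI)
    fix n :: nat
    have m: "(\<lambda>x. \<integral>\<^sup>+s. indicator {0..real n} s * hN (T s x) \<partial>lborel) \<in> borel_measurable M"
    proof -
      have [measurable]: "(\<lambda>p. hN (T (snd p) (fst p))) \<in> borel_measurable (M \<Otimes>\<^sub>M lborel)"
        by (rule measurable_compose[OF Tswap_meas hNm])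
      show ?thesis by measurable
    qed
    have "(\<integral>\<^sup>+x. \<integral>\<^sup>+s. indicator {0..real n} s * hN (T s x) \<partial>lborel \<partial>M) = ennreal (real n) * (\<integral>\<^sup>+x. hN x \<partial>M)"
      using fub[OF hNm, of 0 "real n"] by simp
    also have "\<dots> \<noteq> \<infinity>" using int_hN by (simp add: ennreal_mult_eq_top_iff)
    finally show "AE x in M. (\<integral>\<^sup>+s. indicator {0..real n} s * hN (T s x) \<partial>lborel) \<noteq> \<infinity>"
      by (intro nn_integral_PInf_AE m)
  qed
  define A where "A j = T (Nf j) -` Bdf j" for j
  have As[measurable]: "A j \<in> sets M" for j
    unfolding A_def using measurable_sets[OF Tmeas Bds] by (simp add: space_M)
  have Ab: "measure M (A j) \<le> 4 * (1/4)^j" for j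
  proof -
    have "measure M (A j) = measure M (Bdf j)" unfolding A_def by (rule measure_T) simp
    also have "\<dots> \<le> 4 / real (Lf j)" using Bdb[of j] Lf1[of j] by (simp add: field_simps)
    also have "\<dots> \<le> 4 / 4^j" using Lf4[of j] Lf1[of j] by (intro divide_left_mono) (auto intro: mult_pos_pos)
    finally show ?thesis by (simp add: power_one_over)
  qed
  have AEbc: "AE x in M. eventually (\<lambda>j. x \<in> space M - A j) sequentially"
  proof (rule borel_cantelli_AE1)
    show "summable (\<lambda>j. measure M (A j))"
      by (rule summable_comparison_test[of _ "\<lambda>j. 4 * (1/4::real)^j"])
         (use Ab in \<open>auto intro!: summable_mult summable_geometric\<close>)
    show "\<And>n. emeasure M (A n) < \<infinity>" using emeasure_finite by (auto simp: less_top[symmetric])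
  qed auto
  have "AE x in M. Limsup at_top (\<lambda>t. ereal (\<bar>birkhoff_avg T f t x\<bar> / \<phi> t)) = \<infinity>"
    using AEfin AEbc
  proof eventually_elim
    case (elim x)
    note fin = elim(1)[rule_format]
    obtain j0 where j0: "\<And>j. j \<ge> j0 \<Longrightarrow> x \<notin> A j" using elim(2) by (auto simp: eventually_sequentially)
    define cx where "cx = enn2real (\<integral>\<^sup>+s. indicator {0<..1} s * hN (T s x) \<partial>lborel)"
    have cx0: "0 \<le> cx" unfolding cx_def by simp
    show ?case
    proof (rule limsup_infI)
      fix C N0 :: real
      obtain j :: nat where j: "j \<ge> j0" "real j \<ge> 2 * C" "real j \<ge> 2 * cx" "real j \<ge> N0"
      proof -
        obtain m :: nat where "max (max (2 * C) (2 * cx)) N0 \<le> real m" using real_arch_simple by blast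
        thus ?thesis using that[of "max m j0"] by auto
      qed
      have xA: "T (Nf j) x \<notin> Bdf j" using j0[OF j(1)] unfolding A_def by auto
      obtain t where t: "0 \<le> t" "t < real (Lf j)" "\<And>s. t < s \<Longrightarrow> s \<le> t + 1 \<Longrightarrow> T s (T (Nf j) x) \<in> Dpf j"
        using win[OF xA] by blast
      define \<tau> where "\<tau> = Nf j + t"
      have \<tau>1: "1 \<le> \<tau>" "N0 \<le> \<tau>" "Nf j \<le> \<tau>" "\<tau> \<le> Nf j + real (Lf j)"
        using Nf(1)[of j] t j unfolding \<tau>_def by auto
      define W where "W = (\<integral>\<^sup>+s. indicator {\<tau>..<\<tau>+1} s * hN (T s x) \<partial>lborel)"
      have Wge: "ennreal (lam j) \<le> W"
      proof -
        have "ennreal (lam j) = (\<integral>\<^sup>+s. indicator {\<tau><..<\<tau>+1} s * ennreal (lam j) \<partial>lborel)"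
          by (subst nn_integral_multc) auto
        also have "\<dots> \<le> W" unfolding W_def
        proof (intro nn_integral_mono)
          fix s
          show "indicator {\<tau><..<\<tau>+1} s * ennreal (lam j) \<le> indicator {\<tau>..<\<tau>+1} s * hN (T s x)"
          proof (cases "s \<in> {\<tau><..<\<tau>+1}")
            case True
            have "T (s - Nf j) (T (Nf j) x) \<in> Dpf j" using True unfolding \<tau>_def by (intro t(3)) auto
            hence "T s x \<in> Dpf j" by (simp add: Tadd[symmetric])
            hence "ennreal (lam j) \<le> hN (T s x)"
              unfolding hN_def using ennreal_term_le_suminf[of "\<lambda>i. ennreal (lam i) * indicator (Dpf i) (T s x)" j] by simp
            thus ?thesis using True by (auto simp: indicator_def)
          qed (auto simp: indicator_def)
        qed
        finally show ?thesis .
      qed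
      have Wfin: "W \<noteq> \<infinity>"
      proof -
        obtain n :: nat where n: "\<tau> + 1 \<le> real n" using real_arch_simple by blast
        have "W \<le> (\<integral>\<^sup>+s. indicator {0..real n} s * hN (T s x) \<partial>lborel)"
          unfolding W_def using n \<tau>1 by (intro nn_integral_mono) (auto simp: indicator_def)
        thus ?thesis using fin[of n] by (auto simp: top_unique)
      qed
      have Wr: "lam j \<le> enn2real W"
      proof -
        have "W = ennreal (enn2real W)" using Wfin by (simp add: ennreal_enn2real_if)
        hence "ennreal (lam j) \<le> ennreal (enn2real W)" using Wge by simp
        thus ?thesis by (subst (asm) ennreal_le_iff) auto
      qed
      have ident: "\<tau> * birkhoff_avg T f \<tau> x = cx - enn2real W"
        unfolding f_def h_def cx_def W_def by (rule avg_identity[OF hNm fin \<tau>1(1)])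
      have \<phi>\<tau>: "0 < \<phi> \<tau>" "\<phi> \<tau> \<le> 1 / 4^j" using \<phi>pos \<tau>1 Nf(2)[of j \<tau>] by auto
      have tp: "\<tau> * \<phi> \<tau> \<le> (Nf j + real (Lf j)) / 4^j"
      proof -
        have "\<tau> * \<phi> \<tau> \<le> (Nf j + real (Lf j)) * (1 / 4^j)"
          using \<tau>1 \<phi>\<tau> by (intro mult_mono) auto
        thus ?thesis by simp
      qed
      have pos: "0 < \<tau> * \<phi> \<tau>" using \<tau>1 \<phi>\<tau> by simp
      have "real j * (\<tau> * \<phi> \<tau>) \<le> real j * ((Nf j + real (Lf j)) / 4^j)"
        using tp by (intro mult_left_mono) auto
      hence lamj: "real j * (\<tau> * \<phi> \<tau>) \<le> lam j" unfolding lam_def by (simp add: algebra_simps)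
      have "real j \<le> lam j"
      proof -
        have "0 \<le> (Nf j + real (Lf j)) / 4^j" using Nf(1)[of j] by simp
        hence "real j * 1 \<le> real j * ((Nf j + real (Lf j)) / 4^j + 1)" by (intro mult_left_mono) auto
        thus ?thesis unfolding lam_def by simp
      qed
      hence "cx \<le> lam j / 2" using j(3) by linarith
      hence absge: "lam j / 2 \<le> \<bar>\<tau> * birkhoff_avg T f \<tau> x\<bar>" using ident Wr by linarith
      have "C * (\<tau> * \<phi> \<tau>) \<le> real j / 2 * (\<tau> * \<phi> \<tau>)" using j(2) pos by (intro mult_right_mono) auto
      also have "\<dots> \<le> lam j / 2" using lamj by simp
      also have "\<dots> \<le> \<bar>\<tau> * birkhoff_avg T f \<tau> x\<bar>" by (rule absge)
      also have "\<dots> = \<tau> * \<bar>birkhoff_avg T f \<tau> x\<bar>" using \<tau>1 by (simp add: abs_mult)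
      finally have "C * (\<tau> * \<phi> \<tau>) \<le> \<tau> * \<bar>birkhoff_avg T f \<tau> x\<bar>" .
      hence "C \<le> \<bar>birkhoff_avg T f \<tau> x\<bar> / \<phi> \<tau>" using \<tau>1 \<phi>\<tau> by (simp add: field_simps)
      thus "\<exists>\<tau>'\<ge>N0. ereal C \<le> ereal (\<bar>birkhoff_avg T f \<tau>' x\<bar> / \<phi> \<tau>')" using \<tau>1 by auto
    qed
  qed
  thus ?thesis using if_ intf by blast
qed

end

theorem theorem3:
  fixes M :: "'a::polish_space measure"
    and T :: "real \<Rightarrow> 'a \<Rightarrow> 'a"
    and \<phi> :: "real \<Rightarrow> real"
  assumes "standard_prob_space M"
    and "mp_flow M T"
    and "aperiodic_flow M T"
    and "ergodic_flow M T"
    and "\<forall>t>0. \<phi> t > 0"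
    and "(\<phi> \<longlongrightarrow> 0) at_top"
  shows "\<exists>f. integrable M f \<and> integral\<^sup>L M f = 0 \<and>
           (AE x in M. Limsup at_top (\<lambda>t. ereal (\<bar>birkhoff_avg T f t x\<bar> / \<phi> t)) = \<infinity>)"
proof -
  have P: "prob_space M" and S: "sets M = sets borel"
    using assms(1) unfolding standard_prob_space_def by auto
  have sp: "space M = UNIV" using sets_eq_imp_space_eq[OF S] by simp
  have mp: "(\<lambda>(t, x). T t x) \<in> measurable (lborel \<Otimes>\<^sub>M M) M"
    "\<forall>x\<in>space M. T 0 x = x" "\<forall>s t. \<forall>x\<in>space M. T (s + t) x = T s (T t x)"
    "\<forall>t. T t \<in> measurable M M \<and> distr M M (T t) = M"
    using assms(2) unfolding mp_flow_def by auto
  interpret fl M T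
    by (intro fl.intro fl_axioms.intro P S) (use mp sp in auto)
  have ap: "AE x in M. \<forall>t>0. T t x \<noteq> x" using assms(3) unfolding aperiodic_flow_def .
  have ergo: "\<And>A. A \<in> sets M \<Longrightarrow> (\<forall>t. T t -` A \<inter> space M = A) \<Longrightarrow> measure M A = 0 \<or> measure M A = 1"
    using assms(4) unfolding ergodic_flow_def by auto
  show ?thesis by (rule main[OF ap ergo assms(5) assms(6)])
qed

end
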